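(* A geodesic metric space $X$ is asymptotically CAT(0) if and only if there exists a function $f:\mathbb{R}_+\to\mathbb{R}_+$ with $\lim_{r\to\infty} f(r)/r=0$ such that for every $r>0$, every ball of radius $r$ in $X$ is $f(r)$-CAT(0).
   Context: A metric space is asymptotically CAT(0) if all of its asymptotic cones (for all non-principal ultrafilters, all scaling sequences $a_n\to\infty$ and all base point sequences) are CAT(0). For a geodesic triangle $\triangle$ in $X$ with Euclidean comparison triangle $\bar\triangle$ (same side lengths), and $\delta\ge 0$, $\triangle$ satisfies the $\delta$-CAT(0) inequality if $d(p,q)\le d(\bar p,\bar q)+\delta$ for all $p,q\in\triangle$ with comparison points $\bar p,\bar q\in\bar\triangle$. "A ball of radius $r$ is $\delta$-CAT(0)" means: every geodesic triangle in $X$ whose vertices lie in that ball satisfies the $\delta$-CAT(0) inequality (balls are not assumed convex; geodesic sides may leave the ball). *)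

theory Defs
  imports "HOL-Analysis.Analysis"
begin

definition geodesic_seg :: "'b set \<Rightarrow> ('b \<Rightarrow> 'b \<Rightarrow> real) \<Rightarrow> (real \<Rightarrow> 'b) \<Rightarrow> 'b \<Rightarrow> 'b \<Rightarrow> bool" where
  "geodesic_seg M d \<gamma> x y \<longleftrightarrow>
     \<gamma> 0 = x \<and> \<gamma> (d x y) = y \<and> \<gamma> ` {0..d x y} \<subseteq> M \<and>
     (\<forall>s\<in>{0..d x y}. \<forall>t\<in>{0..d x y}. d (\<gamma> s) (\<gamma> t) = \<bar>s - t\<bar>)"

definition geodesic_space :: "'b set \<Rightarrow> ('b \<Rightarrow> 'b \<Rightarrow> real) \<Rightarrow> bool" where
  "geodesic_space M d \<longleftrightarrow> (\<forall>x\<in>M. \<forall>y\<in>M. \<exists>\<gamma>. geodesic_seg M d \<gamma> x y)"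

definition cmp_pt :: "real^2 \<Rightarrow> real^2 \<Rightarrow> real \<Rightarrow> real^2" where
  "cmp_pt A B s = A + (s / dist A B) *\<^sub>R (B - A)"

definition delta_cat0_triangle ::
  "'b set \<Rightarrow> ('b \<Rightarrow> 'b \<Rightarrow> real) \<Rightarrow> real \<Rightarrow> 'b \<Rightarrow> 'b \<Rightarrow> 'b \<Rightarrow>
   (real \<Rightarrow> 'b) \<Rightarrow> (real \<Rightarrow> 'b) \<Rightarrow> (real \<Rightarrow> 'b) \<Rightarrow> bool" where
  "delta_cat0_triangle M d \<delta> x1 x2 x3 g1 g2 g3 \<longleftrightarrow>
     (\<forall>P1 P2 P3 :: real^2.
        dist P1 P2 = d x1 x2 \<and> dist P2 P3 = d x2 x3 \<and> dist P3 P1 = d x3 x1 \<longrightarrow>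
        (\<forall>(g, A, B) \<in> {(g1, P1, P2), (g2, P2, P3), (g3, P3, P1)}.
         \<forall>(g', A', B') \<in> {(g1, P1, P2), (g2, P2, P3), (g3, P3, P1)}.
         \<forall>s\<in>{0..dist A B}. \<forall>t\<in>{0..dist A' B'}.
            d (g s) (g' t) \<le> dist (cmp_pt A B s) (cmp_pt A' B' t) + \<delta>))"

text \<open>Every geodesic triangle with vertices in V satisfies the delta-CAT(0) inequality
  (sides are geodesics in M, they may leave V).\<close>
definition delta_cat0_on :: "'b set \<Rightarrow> ('b \<Rightarrow> 'b \<Rightarrow> real) \<Rightarrow> real \<Rightarrow> 'b set \<Rightarrow> bool" where
  "delta_cat0_on M d \<delta> V \<longleftrightarrow>
     (\<forall>x1\<in>V. \<forall>x2\<in>V. \<forall>x3\<in>V. \<forall>g1 g2 g3.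
        geodesic_seg M d g1 x1 x2 \<and> geodesic_seg M d g2 x2 x3 \<and> geodesic_seg M d g3 x3 x1 \<longrightarrow>
        delta_cat0_triangle M d \<delta> x1 x2 x3 g1 g2 g3)"

definition CAT0_space :: "'b set \<Rightarrow> ('b \<Rightarrow> 'b \<Rightarrow> real) \<Rightarrow> bool" where
  "CAT0_space M d \<longleftrightarrow> geodesic_space M d \<and> delta_cat0_on M d 0 M"

definition ultrafilter :: "'i filter \<Rightarrow> bool" where
  "ultrafilter U \<longleftrightarrow> U \<noteq> bot \<and> (\<forall>P. eventually P U \<or> eventually (\<lambda>x. \<not> P x) U)"

definition nonprincipal :: "'i filter \<Rightarrow> bool" where
  "nonprincipal U \<longleftrightarrow> (\<forall>i. eventually (\<lambda>j. j \<noteq> i) U)"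

definition cone_seqs :: "nat filter \<Rightarrow> (nat \<Rightarrow> real) \<Rightarrow> (nat \<Rightarrow> 'a::metric_space) \<Rightarrow> (nat \<Rightarrow> 'a) set" where
  "cone_seqs U a e = {x. \<exists>B. eventually (\<lambda>n. dist (x n) (e n) / a n \<le> B) U}"

definition cone_pdist :: "nat filter \<Rightarrow> (nat \<Rightarrow> real) \<Rightarrow> (nat \<Rightarrow> 'a::metric_space) \<Rightarrow> (nat \<Rightarrow> 'a) \<Rightarrow> real" where
  "cone_pdist U a x y = Lim U (\<lambda>n. dist (x n) (y n) / a n)"

definition cone_pts :: "nat filter \<Rightarrow> (nat \<Rightarrow> real) \<Rightarrow> (nat \<Rightarrow> 'a::metric_space) \<Rightarrow> (nat \<Rightarrow> 'a) set set" where
  "cone_pts U a e = (\<lambda>x. {y \<in> cone_seqs U a e. cone_pdist U a x y = 0}) ` cone_seqs U a e"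

definition cone_dist :: "nat filter \<Rightarrow> (nat \<Rightarrow> real) \<Rightarrow> (nat \<Rightarrow> 'a::metric_space) set \<Rightarrow> (nat \<Rightarrow> 'a) set \<Rightarrow> real" where
  "cone_dist U a P Q = cone_pdist U a (SOME x. x \<in> P) (SOME y. y \<in> Q)"

definition asymptotically_CAT0 :: "'a::metric_space itself \<Rightarrow> bool" where
  "asymptotically_CAT0 (_ :: 'a itself) \<longleftrightarrow>
     (\<forall>(U :: nat filter) (a :: nat \<Rightarrow> real) (e :: nat \<Rightarrow> 'a).
        ultrafilter U \<and> nonprincipal U \<and> (\<forall>n. 0 < a n) \<and> filterlim a at_top sequentially \<longrightarrow>
        CAT0_space (cone_pts U a e) (cone_dist U a))"

end

theory Submission
  imports Defs
begin


definition wc :: "nat \<Rightarrow> nat \<Rightarrow> real \<Rightarrow> real" where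
  "wc i K u = (if i = K then 1 - u else if i = Suc K mod 3 then u else 0)"

definition Qd :: "real \<Rightarrow> real \<Rightarrow> real \<Rightarrow> nat \<Rightarrow> real \<Rightarrow> nat \<Rightarrow> real \<Rightarrow> real" where
  "Qd l1 l2 l3 K u K' v = (let w0 = wc 0 K u - wc 0 K' v; w1 = wc 1 K u - wc 1 K' v;
      w2 = wc 2 K u - wc 2 K' v in - (w0 * w1 * l1\<^sup>2 + w1 * w2 * l2\<^sup>2 + w2 * w0 * l3\<^sup>2))"

definition sel :: "nat \<Rightarrow> 'x \<Rightarrow> 'x \<Rightarrow> 'x \<Rightarrow> 'x" where
  "sel K p q r = (if K = 0 then p else if K = 1 then q else r)"

lemma less3: "(K::nat) < 3 \<longleftrightarrow> K = 0 \<or> K = 1 \<or> K = 2" by auto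

lemma norm_comb0:
  fixes P1 P2 P3 :: "'v::real_inner"
  assumes "w0 + w1 + w2 = 0"
  shows "(norm (w0 *\<^sub>R P1 + w1 *\<^sub>R P2 + w2 *\<^sub>R P3))\<^sup>2 =
    - (w0 * w1 * (dist P1 P2)\<^sup>2 + w1 * w2 * (dist P2 P3)\<^sup>2 + w2 * w0 * (dist P3 P1)\<^sup>2)"
proof -
  define u where "u = P1 - P3"
  define v where "v = P2 - P3"
  have w2: "w2 = - w0 - w1" using assms by simp
  have e: "w0 *\<^sub>R P1 + w1 *\<^sub>R P2 + w2 *\<^sub>R P3 = w0 *\<^sub>R u + w1 *\<^sub>R v"
    unfolding u_def v_def w2 by (simp add: algebra_simps)
  have n: "(norm (w0 *\<^sub>R u + w1 *\<^sub>R v))\<^sup>2 = w0\<^sup>2 * (u \<bullet> u) + w1\<^sup>2 * (v \<bullet> v) + 2 * w0 * w1 * (u \<bullet> v)"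
    unfolding power2_norm_eq_inner by (simp add: inner_add_left inner_add_right inner_commute power2_eq_square algebra_simps)
  have d12: "(dist P1 P2)\<^sup>2 = u \<bullet> u + v \<bullet> v - 2 * (u \<bullet> v)"
  proof -
    have "P1 - P2 = u - v" unfolding u_def v_def by simp
    then show ?thesis unfolding dist_norm power2_norm_eq_inner
      by (simp add: inner_diff_left inner_diff_right inner_commute)
  qed
  have d23: "(dist P2 P3)\<^sup>2 = v \<bullet> v"
    unfolding dist_norm power2_norm_eq_inner v_def by simp
  have d31: "(dist P3 P1)\<^sup>2 = u \<bullet> u"
    by (simp add: dist_commute dist_norm power2_norm_eq_inner u_def)
  have "(norm (w0 *\<^sub>R P1 + w1 *\<^sub>R P2 + w2 *\<^sub>R P3))\<^sup>2 = (norm (w0 *\<^sub>R u + w1 *\<^sub>R v))\<^sup>2"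
    by (simp only: e)
  also have "\<dots> = w0\<^sup>2 * (u \<bullet> u) + w1\<^sup>2 * (v \<bullet> v) + 2 * w0 * w1 * (u \<bullet> v)" by (rule n)
  also have "\<dots> = - (w0 * w1 * (dist P1 P2)\<^sup>2 + w1 * w2 * (dist P2 P3)\<^sup>2 + w2 * w0 * (dist P3 P1)\<^sup>2)"
    unfolding d12 d23 d31 w2 by (simp add: algebra_simps power2_eq_square)
  finally show ?thesis .
qed

lemma cmp_comb:
  fixes P1 P2 P3 :: "real^2"
  assumes "K < 3" "u = s / dist (sel K P1 P2 P3) (sel K P2 P3 P1)"
  shows "cmp_pt (sel K P1 P2 P3) (sel K P2 P3 P1) s =
    wc 0 K u *\<^sub>R P1 + wc 1 K u *\<^sub>R P2 + wc 2 K u *\<^sub>R P3"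
proof -
  have "K = 0 \<or> K = 1 \<or> K = 2" using assms by auto
  then show ?thesis
  proof (elim disjE)
    assume K: "K = 0"
    then show ?thesis using assms(2) unfolding cmp_pt_def wc_def sel_def
      by (simp add: scaleR_diff_right scaleR_diff_left)
  next
    assume K: "K = 1"
    then show ?thesis using assms(2) unfolding cmp_pt_def wc_def sel_def
      by (simp add: scaleR_diff_right scaleR_diff_left)
  next
    assume K: "K = 2"
    then show ?thesis using assms(2) unfolding cmp_pt_def wc_def sel_def
      by (simp add: scaleR_diff_right scaleR_diff_left algebra_simps)
  qed
qed

lemma sum_wc: "(K::nat) < 3 \<Longrightarrow> K' < 3 \<Longrightarrow>
  (wc 0 K u - wc 0 K' v) + (wc 1 K u - wc 1 K' v) + (wc 2 K u - wc 2 K' v) = 0"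
  unfolding less3 wc_def by (elim disjE) simp_all

lemma comb_diff: "(a0 *\<^sub>R P1 + a1 *\<^sub>R P2 + a2 *\<^sub>R P3) - (b0 *\<^sub>R P1 + b1 *\<^sub>R P2 + b2 *\<^sub>R (P3::real^2)) = (a0 - b0) *\<^sub>R P1 + (a1 - b1) *\<^sub>R P2 + (a2 - b2) *\<^sub>R P3"
  by (simp add: scaleR_diff_left)

lemma dist_sel: "dist (sel K P1 P2 P3) (sel K P2 P3 P1) = sel K (dist P1 P2) (dist P2 P3) (dist P3 P1)"
  unfolding sel_def by simp

lemma dist_cmp:
  fixes P1 P2 P3 :: "real^2"
  assumes "K < 3" "K' < 3"
  shows "dist (cmp_pt (sel K P1 P2 P3) (sel K P2 P3 P1) s) (cmp_pt (sel K' P1 P2 P3) (sel K' P2 P3 P1) t)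
    = sqrt (Qd (dist P1 P2) (dist P2 P3) (dist P3 P1) K (s / sel K (dist P1 P2) (dist P2 P3) (dist P3 P1))
          K' (t / sel K' (dist P1 P2) (dist P2 P3) (dist P3 P1)))"
proof -
  define u where "u = s / sel K (dist P1 P2) (dist P2 P3) (dist P3 P1)"
  define v where "v = t / sel K' (dist P1 P2) (dist P2 P3) (dist P3 P1)"
  have u: "u = s / dist (sel K P1 P2 P3) (sel K P2 P3 P1)" unfolding u_def dist_sel ..
  have v: "v = t / dist (sel K' P1 P2 P3) (sel K' P2 P3 P1)" unfolding v_def dist_sel ..
  define w0 where "w0 = wc 0 K u - wc 0 K' v"
  define w1 where "w1 = wc 1 K u - wc 1 K' v"
  define w2 where "w2 = wc 2 K u - wc 2 K' v"
  have sum: "w0 + w1 + w2 = 0" unfolding w0_def w1_def w2_def using sum_wc[OF assms] .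
  have "dist (cmp_pt (sel K P1 P2 P3) (sel K P2 P3 P1) s) (cmp_pt (sel K' P1 P2 P3) (sel K' P2 P3 P1) t)
     = norm (w0 *\<^sub>R P1 + w1 *\<^sub>R P2 + w2 *\<^sub>R P3)"
    unfolding cmp_comb[OF assms(1) u] cmp_comb[OF assms(2) v] dist_norm w0_def w1_def w2_def comb_diff ..
  also have "\<dots> = sqrt ((norm (w0 *\<^sub>R P1 + w1 *\<^sub>R P2 + w2 *\<^sub>R P3))\<^sup>2)" by simp
  also have "\<dots> = sqrt (- (w0 * w1 * (dist P1 P2)\<^sup>2 + w1 * w2 * (dist P2 P3)\<^sup>2 + w2 * w0 * (dist P3 P1)\<^sup>2))"
    using norm_comb0[OF sum, of P1 P2 P3] by simp
  also have "\<dots> = sqrt (Qd (dist P1 P2) (dist P2 P3) (dist P3 P1) K u K' v)"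
    unfolding Qd_def Let_def w0_def w1_def w2_def ..
  finally show ?thesis unfolding u_def v_def .
qed

lemma exists_config:
  fixes l1 l2 l3 :: real
  assumes "0 \<le> l1" "0 \<le> l2" "0 \<le> l3" "l1 \<le> l2 + l3" "l2 \<le> l1 + l3" "l3 \<le> l1 + l2"
  shows "\<exists>P1 P2 P3 :: real^2. dist P1 P2 = l1 \<and> dist P2 P3 = l2 \<and> dist P3 P1 = l3"
proof -
  define e1 :: "real^2" where "e1 = axis 1 1"
  define e2 :: "real^2" where "e2 = axis 2 1"
  have ee: "e1 \<bullet> e1 = 1" "e2 \<bullet> e2 = 1" "e1 \<bullet> e2 = 0" "e2 \<bullet> e1 = 0"
    unfolding e1_def e2_def by (auto simp: inner_axis_axis)
  have nrm: "norm (x *\<^sub>R e1 + y *\<^sub>R e2) = sqrt (x\<^sup>2 + y\<^sup>2)" for x y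
    unfolding norm_eq_sqrt_inner by (simp add: inner_add_left inner_add_right ee power2_eq_square)
  show ?thesis
  proof (cases "l1 = 0")
    case True
    then have "l2 = l3" using assms by auto
    show ?thesis
      by (rule exI[of _ 0], rule exI[of _ 0], rule exI[of _ "l3 *\<^sub>R e1"])
        (use nrm[of l3 0] nrm[of "-l3" 0] True \<open>l2 = l3\<close> assms in \<open>auto simp: dist_norm\<close>)
  next
    case False
    then have l1p: "l1 > 0" using assms by auto
    define x where "x = (l1\<^sup>2 + l3\<^sup>2 - l2\<^sup>2) / (2 * l1)"
    have "\<bar>l1\<^sup>2 + l3\<^sup>2 - l2\<^sup>2\<bar> \<le> 2 * l1 * l3"
    proof -
      have "l2\<^sup>2 \<le> (l1 + l3)\<^sup>2" using assms by (intro power_mono) auto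
      moreover have "(l1 - l3)\<^sup>2 \<le> l2\<^sup>2"
      proof -
        have "\<bar>l1 - l3\<bar> \<le> l2" using assms by auto
        then have "\<bar>l1 - l3\<bar>\<^sup>2 \<le> l2\<^sup>2" by (intro power_mono) auto
        then show ?thesis by simp
      qed
      ultimately show ?thesis unfolding abs_le_iff by (simp add: power2_eq_square algebra_simps)
    qed
    then have "\<bar>x\<bar> \<le> l3" unfolding x_def using l1p
      by (simp add: abs_div divide_le_eq mult.commute mult.left_commute)
    then have xl: "x\<^sup>2 \<le> l3\<^sup>2" by (metis abs_le_square_iff abs_of_nonneg assms(3))
    define y where "y = sqrt (l3\<^sup>2 - x\<^sup>2)"
    have y2: "y\<^sup>2 = l3\<^sup>2 - x\<^sup>2" unfolding y_def using xl by simp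
    have xx: "2 * l1 * x = l1\<^sup>2 + l3\<^sup>2 - l2\<^sup>2" unfolding x_def using l1p by simp
    have a: "dist 0 (l1 *\<^sub>R e1) = l1" using nrm[of l1 0] assms by (simp add: dist_norm)
    have b: "dist (l1 *\<^sub>R e1) (x *\<^sub>R e1 + y *\<^sub>R e2) = l2"
    proof -
      have "l1 *\<^sub>R e1 - (x *\<^sub>R e1 + y *\<^sub>R e2) = (l1 - x) *\<^sub>R e1 + (- y) *\<^sub>R e2"
        by (simp add: algebra_simps)
      then have "dist (l1 *\<^sub>R e1) (x *\<^sub>R e1 + y *\<^sub>R e2) = norm ((l1 - x) *\<^sub>R e1 + (- y) *\<^sub>R e2)"
        unfolding dist_norm by metis
      also have "\<dots> = sqrt ((l1 - x)\<^sup>2 + y\<^sup>2)" unfolding nrm by simp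
      also have "(l1 - x)\<^sup>2 + y\<^sup>2 = l2\<^sup>2" using y2 xx by (simp add: power2_eq_square algebra_simps)
      finally show ?thesis using assms by simp
    qed
    have c: "dist (x *\<^sub>R e1 + y *\<^sub>R e2) 0 = l3"
      using nrm[of x y] y2 assms by (simp add: dist_norm)
    show ?thesis using a b c by blast
  qed
qed


lemma ex_max_ultrafilter:
  fixes F :: "'x filter"
  assumes F: "F \<noteq> bot"
  shows "\<exists>U\<le>F. ultrafilter U"
proof -
  let ?X = "{G. G \<noteq> bot \<and> G \<le> F}"
  let ?R = "{(b, a). a \<noteq> bot \<and> a \<le> b \<and> b \<le> F}"
  have bot_notin_R: "c \<in> Chains ?R \<Longrightarrow> bot \<notin> c" for c
    by (auto simp: Chains_def)
  have [simp]: "Field ?R = ?X"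
    by (auto simp: Field_def bot_unique)
  have "\<exists>m\<in>Field ?R. \<forall>a\<in>Field ?R. (m, a) \<in> ?R \<longrightarrow> a = m" (is "\<exists>m\<in>?A. ?B m")
  proof (rule Zorns_po_lemma)
    show "Partial_order ?R"
      by (auto simp: partial_order_on_def preorder_on_def
          antisym_def refl_on_def trans_def Field_def bot_unique)
    show "\<exists>u\<in>Field ?R. \<forall>a\<in>C. (a, u) \<in> ?R" if C: "C \<in> Chains ?R" for C
    proof (simp, intro exI conjI ballI)
      have Inf_C: "Inf C \<noteq> bot" "Inf C \<le> F" if "C \<noteq> {}"
      proof -
        from C that have "Inf C = bot \<longleftrightarrow> (\<exists>x\<in>C. x = bot)"
          unfolding trivial_limit_def by (intro eventually_Inf_base) (auto simp: Chains_def)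
        with C show "Inf C \<noteq> bot"
          by (simp add: bot_notin_R)
        from that obtain x where "x \<in> C" by auto
        with C show "Inf C \<le> F"
          by (auto intro!: Inf_lower2[of x] simp: Chains_def)
      qed
      then have [simp]: "inf F (Inf C) = (if C = {} then F else Inf C)"
        using C by (auto simp add: inf_absorb2)
      from C show "inf F (Inf C) \<noteq> bot"
        by (simp add: F Inf_C)
      from C show "inf F (Inf C) \<le> F"
        by (simp add: Chains_def Inf_C F)
      with C show "inf F (Inf C) \<le> x" "x \<le> F" if "x \<in> C" for x
        using that  by (auto intro: Inf_lower simp: Chains_def)
    qed
  qed
  then obtain U where U: "U \<in> ?A" "?B U" ..
  have uF: "U \<le> F" "U \<noteq> bot" using U(1) by auto
  have "ultrafilter U" unfolding ultrafilter_def
  proof (intro conjI allI)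
    show "U \<noteq> bot" using U by auto
    fix P
    show "eventually P U \<or> (\<forall>\<^sub>Fx in U. \<not> P x)"
    proof (rule disjCI)
      assume "\<not> (\<forall>\<^sub>Fx in U. \<not> P x)"
      then have "inf U (principal {x. P x}) \<noteq> bot"
        by (simp add: trivial_limit_def eventually_inf_principal not_eventually)
      moreover have "inf U (principal {x. P x}) \<le> U" by simp
      moreover have "inf U (principal {x. P x}) \<le> F" using U(1) by (auto intro: order_trans[OF inf_le1])
      ultimately have "inf U (principal {x. P x}) = U" using U(2) uF by auto
      then have eq: "U = inf U (principal {x. P x})" by simp
      show "eventually P U"
        by (subst eq) (simp add: eventually_inf_principal)
    qed
  qed
  then show ?thesis using uF by blast
qed

lemma ex_nonprincipal_ultrafilter: "\<exists>U :: nat filter. ultrafilter U \<and> nonprincipal U"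
proof -
  obtain U :: "nat filter" where U: "U \<le> cofinite" "ultrafilter U"
    using ex_max_ultrafilter[of "cofinite :: nat filter"] by auto
  have "nonprincipal U" unfolding nonprincipal_def
  proof
    fix i :: nat
    have "eventually (\<lambda>j. j \<noteq> i) cofinite" by (simp add: eventually_cofinite)
    then show "eventually (\<lambda>j. j \<noteq> i) U" using filter_leD[OF U(1)] by blast
  qed
  then show ?thesis using U by auto
qed

lemma ultrafilter_nontriv: "ultrafilter U \<Longrightarrow> U \<noteq> bot"
  unfolding ultrafilter_def by auto

lemma ultrafilter_cases: "ultrafilter U \<Longrightarrow> eventually P U \<or> eventually (\<lambda>x. \<not> P x) U"
  unfolding ultrafilter_def by auto

lemma ulim_exists:
  fixes x :: "'i \<Rightarrow> real"
  assumes U: "ultrafilter U" and B: "eventually (\<lambda>n. \<bar>x n\<bar> \<le> B) U"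
  shows "\<exists>L. (x \<longlongrightarrow> L) U"
proof -
  have nb: "U \<noteq> bot" using U by (rule ultrafilter_nontriv)
  define T where "T = {y. eventually (\<lambda>n. y \<le> x n) U}"
  have mB: "- B \<in> T" unfolding T_def mem_Collect_eq by (rule eventually_mono[OF B]) auto
  have ub: "y \<le> B" if "y \<in> T" for y
  proof (rule ccontr)
    assume "\<not> y \<le> B"
    have "eventually (\<lambda>n. False) U"
      using eventually_conj[OF B that[unfolded T_def, simplified]]
      by (rule eventually_mono) (use \<open>\<not> y \<le> B\<close> in auto)
    then show False using nb by (simp add: trivial_limit_def)
  qed
  have bdd: "bdd_above T" unfolding bdd_above_def using ub by blast
  define L where "L = Sup T"
  have "(x \<longlongrightarrow> L) U"
  proof (rule order_tendstoI)
    fix y assume "y < L"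
    then obtain z where "z \<in> T" "y < z" using less_cSup_iff[OF _ bdd] mB unfolding L_def by auto
    then show "eventually (\<lambda>n. y < x n) U" unfolding T_def
      by (auto elim: eventually_mono)
  next
    fix y assume "L < y"
    then have "y \<notin> T" using cSup_upper[OF _ bdd] unfolding L_def by force
    then have "\<not> eventually (\<lambda>n. y \<le> x n) U" unfolding T_def by auto
    then have "eventually (\<lambda>n. \<not> y \<le> x n) U" using ultrafilter_cases[OF U] by blast
    then show "eventually (\<lambda>n. x n < y) U" by (auto elim: eventually_mono)
  qed
  then show ?thesis ..
qed

lemma ulim_tendsto:
  fixes x :: "'i \<Rightarrow> real"
  assumes U: "ultrafilter U" and B: "eventually (\<lambda>n. \<bar>x n\<bar> \<le> B) U"
  shows "(x \<longlongrightarrow> Lim U x) U"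
proof -
  obtain L where "(x \<longlongrightarrow> L) U" using ulim_exists[OF assms] by auto
  moreover then have "Lim U x = L" using ultrafilter_nontriv[OF U] by (intro tendsto_Lim)
  ultimately show ?thesis by simp
qed


lemma div_le_add: "p \<le> q + r \<Longrightarrow> (0::real) < c \<Longrightarrow> p / c \<le> q / c + r / c"
  by (metis add_divide_distrib divide_right_mono less_imp_le)

locale cone =
  fixes U :: "nat filter" and a :: "nat \<Rightarrow> real" and e :: "nat \<Rightarrow> 'a::metric_space"
  assumes uf: "ultrafilter U" and np: "nonprincipal U" and apos: "\<And>n. 0 < a n"
    and alim: "filterlim a at_top sequentially"
begin

abbreviation "S \<equiv> cone_seqs U a e"
abbreviation "pd \<equiv> cone_pdist U a"
definition cls :: "(nat \<Rightarrow> 'a) \<Rightarrow> (nat \<Rightarrow> 'a) set" where "cls x = {y \<in> S. pd x y = 0}"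

lemma Unb: "U \<noteq> bot" using uf by (rule ultrafilter_nontriv)

lemma U_le: "U \<le> sequentially"
proof (rule filter_leI)
  fix P assume "eventually P sequentially"
  then obtain N where N: "\<And>n. n \<ge> N \<Longrightarrow> P n" by (auto simp: eventually_sequentially)
  have "eventually (\<lambda>n. \<forall>i\<in>{..<N}. n \<noteq> i) U"
    using np unfolding nonprincipal_def by (intro eventually_ball_finite) auto
  then show "eventually P U" by (rule eventually_mono) (metis N lessThan_iff not_le)
qed

lemma aU: "filterlim a at_top U" by (rule filterlim_mono[OF alim order_refl U_le])

lemma inS: "x \<in> S \<longleftrightarrow> (\<exists>B. eventually (\<lambda>n. dist (x n) (e n) / a n \<le> B) U)"
  unfolding cone_seqs_def by simp

lemma bdd: assumes "x \<in> S" "y \<in> S"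
  shows "\<exists>B. eventually (\<lambda>n. \<bar>dist (x n) (y n) / a n\<bar> \<le> B) U"
proof -
  obtain B1 B2 where "eventually (\<lambda>n. dist (x n) (e n) / a n \<le> B1) U"
    "eventually (\<lambda>n. dist (y n) (e n) / a n \<le> B2) U" using assms unfolding inS by auto
  then have "eventually (\<lambda>n. \<bar>dist (x n) (y n) / a n\<bar> \<le> B1 + B2) U"
  proof (rule eventually_elim2)
    fix n assume h: "dist (x n) (e n) / a n \<le> B1" "dist (y n) (e n) / a n \<le> B2"
    have "dist (x n) (y n) \<le> dist (x n) (e n) + dist (y n) (e n)" by (rule dist_triangle2)
    then have "dist (x n) (y n) / a n \<le> dist (x n) (e n) / a n + dist (y n) (e n) / a n"
      using apos[of n] by (rule div_le_add)
    then show "\<bar>dist (x n) (y n) / a n\<bar> \<le> B1 + B2" using h apos[of n] by simp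
  qed
  then show ?thesis ..
qed

lemma pd_tendsto: assumes "x \<in> S" "y \<in> S"
  shows "((\<lambda>n. dist (x n) (y n) / a n) \<longlongrightarrow> pd x y) U"
proof -
  obtain B where "eventually (\<lambda>n. \<bar>dist (x n) (y n) / a n\<bar> \<le> B) U" using bdd[OF assms] by blast
  then show ?thesis unfolding cone_pdist_def by (rule ulim_tendsto[OF uf])
qed

lemma pd_eq: assumes "((\<lambda>n. dist (x n) (y n) / a n) \<longlongrightarrow> L) U" shows "pd x y = L"
  unfolding cone_pdist_def using Unb assms by (rule tendsto_Lim)

lemma S_close: assumes "x \<in> S" "eventually (\<lambda>n. dist (y n) (x n) / a n \<le> B) U" shows "y \<in> S"
proof -
  obtain B1 where "eventually (\<lambda>n. dist (x n) (e n) / a n \<le> B1) U" using assms unfolding inS by auto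
  then have "eventually (\<lambda>n. dist (y n) (e n) / a n \<le> B + B1) U"
  proof (rule eventually_elim2[OF assms(2)])
    fix n assume h: "dist (y n) (x n) / a n \<le> B" "dist (x n) (e n) / a n \<le> B1"
    have "dist (y n) (e n) \<le> dist (y n) (x n) + dist (x n) (e n)" by (rule dist_triangle)
    then have "dist (y n) (e n) / a n \<le> dist (y n) (x n) / a n + dist (x n) (e n) / a n"
      using apos[of n] by (rule div_le_add)
    then show "dist (y n) (e n) / a n \<le> B + B1" using h by simp
  qed
  then show ?thesis unfolding inS by blast
qed

lemma pd_nonneg: assumes "x \<in> S" "y \<in> S" shows "0 \<le> pd x y"
  by (rule tendsto_lowerbound[OF pd_tendsto[OF assms]]) (auto intro!: always_eventually simp: apos less_imp_le Unb)

lemma pd_sym: "pd x y = pd y x"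
  unfolding cone_pdist_def by (simp add: dist_commute)

lemma pd_refl: "pd x x = 0"
  by (rule pd_eq) simp

lemma pd_tri: assumes "x \<in> S" "y \<in> S" "z \<in> S" shows "pd x z \<le> pd x y + pd y z"
proof -
  have "((\<lambda>n. dist (x n) (y n) / a n + dist (y n) (z n) / a n) \<longlongrightarrow> pd x y + pd y z) U"
    by (intro tendsto_add pd_tendsto assms)
  moreover have "eventually (\<lambda>n. dist (x n) (z n) / a n \<le> dist (x n) (y n) / a n + dist (y n) (z n) / a n) U"
    by (intro always_eventually allI)
      (metis add_divide_distrib apos divide_right_mono dist_triangle less_imp_le)
  ultimately show ?thesis using pd_tendsto[OF assms(1,3)] Unb by (intro tendsto_le) auto
qed

lemma cls_mem: "x \<in> S \<Longrightarrow> x \<in> cls x"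
  unfolding cls_def by (simp add: pd_refl)

lemma cls_eq: assumes "x \<in> S" "y \<in> S" shows "cls x = cls y \<longleftrightarrow> pd x y = 0"
proof
  assume "cls x = cls y"
  then have "x \<in> cls y" using cls_mem[OF assms(1)] by simp
  then have "pd y x = 0" unfolding cls_def by auto
  then show "pd x y = 0" by (metis pd_sym)
next
  assume h: "pd x y = 0"
  show "cls x = cls y"
  proof (intro set_eqI iffI)
    fix z assume "z \<in> cls x"
    then have z: "z \<in> S" "pd x z = 0" unfolding cls_def by auto
    have "pd y z \<le> pd y x + pd x z" using pd_tri[OF assms(2,1) z(1)] .
    then have "pd y z = 0" using h z pd_sym[of x y] pd_nonneg[OF assms(2) z(1)] by simp
    then show "z \<in> cls y" using z unfolding cls_def by auto
  next
    fix z assume "z \<in> cls y"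
    then have z: "z \<in> S" "pd y z = 0" unfolding cls_def by auto
    have "pd x z \<le> pd x y + pd y z" using pd_tri[OF assms(1,2) z(1)] .
    then have "pd x z = 0" using h z pd_nonneg[OF assms(1) z(1)] by simp
    then show "z \<in> cls x" using z unfolding cls_def by auto
  qed
qed

lemma cone_pts_eq: "cone_pts U a e = cls ` S"
  unfolding cone_pts_def cls_def ..

lemma cls_in: "x \<in> S \<Longrightarrow> cls x \<in> cone_pts U a e"
  unfolding cone_pts_eq by auto

lemma pd_congr: assumes "x \<in> S" "y \<in> S" "x' \<in> S" "y' \<in> S" "pd x x' = 0" "pd y y' = 0"
  shows "pd x y = pd x' y'"
proof -
  have 1: "pd x y \<le> pd x' y'"
    using pd_tri[OF assms(1,3,2)] pd_tri[OF assms(3,4,2)] assms(5,6) pd_sym[of y' y] by simp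
  have 2: "pd x' y' \<le> pd x y"
    using pd_tri[OF assms(3,1,4)] pd_tri[OF assms(1,2,4)] assms(5,6) pd_sym[of x x'] by simp
  from 1 2 show ?thesis by simp
qed

lemma cd_cls: assumes "x \<in> S" "y \<in> S" shows "cone_dist U a (cls x) (cls y) = pd x y"
proof -
  define x' where "x' = (SOME z. z \<in> cls x)"
  define y' where "y' = (SOME z. z \<in> cls y)"
  have "x' \<in> cls x" unfolding x'_def using cls_mem[OF assms(1)] by (rule someI[of "\<lambda>z. z \<in> cls x"])
  then have x': "x' \<in> S" "pd x x' = 0" unfolding cls_def by auto
  have "y' \<in> cls y" unfolding y'_def using cls_mem[OF assms(2)] by (rule someI[of "\<lambda>z. z \<in> cls y"])
  then have y': "y' \<in> S" "pd y y' = 0" unfolding cls_def by auto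
  show ?thesis unfolding cone_dist_def x'_def[symmetric] y'_def[symmetric]
    using pd_congr[OF assms x'(1) y'(1) x'(2) y'(2)] by simp
qed

lemma rep: assumes "P \<in> cone_pts U a e" obtains x where "x \<in> S" "P = cls x"
  using assms unfolding cone_pts_eq by auto

end


lemma geo_dist: assumes "geodesic_seg M d g x y" "s \<in> {0..d x y}" "t \<in> {0..d x y}"
  shows "d (g s) (g t) = \<bar>s - t\<bar>"
  using assms unfolding geodesic_seg_def by blast

lemma geo_0: "geodesic_seg M d g x y \<Longrightarrow> g 0 = x" unfolding geodesic_seg_def by blast
lemma geo_1: "geodesic_seg M d g x y \<Longrightarrow> g (d x y) = y" unfolding geodesic_seg_def by blast

context cone begin

definition gpt :: "(nat \<Rightarrow> real \<Rightarrow> 'a) \<Rightarrow> (nat \<Rightarrow> 'a) \<Rightarrow> (nat \<Rightarrow> 'a) \<Rightarrow> real \<Rightarrow> nat \<Rightarrow> 'a" where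
  "gpt g x y t n = g n (min (t * a n) (dist (x n) (y n)))"

lemma min_ratio: "0 \<le> t \<Longrightarrow> min (t * a n) L / a n = min t (L / a n)"
  using apos[of n] by (simp add: min_def divide_simps)

lemma min_ratio_tendsto: assumes "((\<lambda>n. L n / a n) \<longlongrightarrow> l) U" "0 \<le> t"
  shows "((\<lambda>n. min (t * a n) (L n) / a n) \<longlongrightarrow> min t l) U"
  unfolding min_ratio[OF assms(2)] by (intro tendsto_min tendsto_const assms(1))

lemma gpt_dist: assumes "geodesic_seg UNIV dist (g n) (x n) (y n)" "0 \<le> s" "0 \<le> t"
  shows "dist (gpt g x y s n) (gpt g x y t n) =
    \<bar>min (s * a n) (dist (x n) (y n)) - min (t * a n) (dist (x n) (y n))\<bar>"
  unfolding gpt_def using assms apos[of n]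
  by (intro geo_dist[OF assms(1)]) auto

lemma gpt_dist_x: assumes "geodesic_seg UNIV dist (g n) (x n) (y n)" "0 \<le> t"
  shows "dist (gpt g x y t n) (x n) = min (t * a n) (dist (x n) (y n))"
proof -
  have "dist (gpt g x y t n) (x n) = dist (g n (min (t * a n) (dist (x n) (y n)))) (g n 0)"
    unfolding gpt_def using geo_0[OF assms(1)] by simp
  also have "\<dots> = \<bar>min (t * a n) (dist (x n) (y n)) - 0\<bar>"
    using assms apos[of n] by (intro geo_dist[OF assms(1)]) auto
  finally show ?thesis using assms apos[of n] by simp
qed

lemma gpt_dist_y: assumes "geodesic_seg UNIV dist (g n) (x n) (y n)" "0 \<le> t"
  shows "dist (gpt g x y t n) (y n) = dist (x n) (y n) - min (t * a n) (dist (x n) (y n))"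
proof -
  have "dist (gpt g x y t n) (y n) = dist (g n (min (t * a n) (dist (x n) (y n)))) (g n (dist (x n) (y n)))"
    unfolding gpt_def using geo_1[OF assms(1)] by simp
  also have "\<dots> = \<bar>min (t * a n) (dist (x n) (y n)) - dist (x n) (y n)\<bar>"
    using assms apos[of n] by (intro geo_dist[OF assms(1)]) auto
  finally show ?thesis by simp
qed

lemma gpt_0: assumes "\<And>n. geodesic_seg UNIV dist (g n) (x n) (y n)" shows "gpt g x y 0 = x"
  using geo_0[OF assms] unfolding gpt_def by (auto simp: fun_eq_iff)

lemma ev_bound: assumes "(f \<longlongrightarrow> (l::real)) U" shows "eventually (\<lambda>n. f n \<le> l + 1) U"
  using order_tendstoD(2)[OF assms, of "l + 1"] by (auto elim: eventually_mono)

lemma gpt_S: assumes "x \<in> S" "y \<in> S" "\<And>n. geodesic_seg UNIV dist (g n) (x n) (y n)" "0 \<le> t"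
  shows "gpt g x y t \<in> S"
proof (rule S_close[OF assms(1)])
  show "eventually (\<lambda>n. dist (gpt g x y t n) (x n) / a n \<le> pd x y + 1) U"
    using ev_bound[OF pd_tendsto[OF assms(1,2)]]
  proof (rule eventually_mono)
    fix n assume "dist (x n) (y n) / a n \<le> pd x y + 1"
    moreover have "dist (gpt g x y t n) (x n) / a n \<le> dist (x n) (y n) / a n"
      unfolding gpt_dist_x[where g=g and x=x and y=y and n=n, OF assms(3)[of n] assms(4)] using apos[of n] by (intro divide_right_mono) auto
    ultimately show "dist (gpt g x y t n) (x n) / a n \<le> pd x y + 1" by simp
  qed
qed

lemma gpt_pd: assumes "x \<in> S" "y \<in> S" "\<And>n. geodesic_seg UNIV dist (g n) (x n) (y n)" "0 \<le> s" "0 \<le> t"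
  shows "pd (gpt g x y s) (gpt g x y t) = \<bar>min s (pd x y) - min t (pd x y)\<bar>"
proof (rule pd_eq)
  have eq: "(\<lambda>n. dist (gpt g x y s n) (gpt g x y t n) / a n) =
    (\<lambda>n. \<bar>min (s * a n) (dist (x n) (y n)) / a n - min (t * a n) (dist (x n) (y n)) / a n\<bar>)"
  proof (rule ext)
    fix n
    show "dist (gpt g x y s n) (gpt g x y t n) / a n =
      \<bar>min (s * a n) (dist (x n) (y n)) / a n - min (t * a n) (dist (x n) (y n)) / a n\<bar>"
      unfolding gpt_dist[where g=g and x=x and y=y and n=n, OF assms(3)[of n] assms(4,5)] using apos[of n]
      by (simp add: diff_divide_distrib[symmetric] abs_div)
  qed
  show "((\<lambda>n. dist (gpt g x y s n) (gpt g x y t n) / a n) \<longlongrightarrow> \<bar>min s (pd x y) - min t (pd x y)\<bar>) U"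
    unfolding eq by (intro tendsto_rabs tendsto_diff min_ratio_tendsto pd_tendsto assms)
qed

lemma gpt_pd_y: assumes "x \<in> S" "y \<in> S" "\<And>n. geodesic_seg UNIV dist (g n) (x n) (y n)" "0 \<le> t"
  shows "pd (gpt g x y t) y = pd x y - min t (pd x y)"
proof (rule pd_eq)
  have eq: "(\<lambda>n. dist (gpt g x y t n) (y n) / a n) =
    (\<lambda>n. dist (x n) (y n) / a n - min (t * a n) (dist (x n) (y n)) / a n)"
  proof (rule ext)
    fix n
    show "dist (gpt g x y t n) (y n) / a n =
      dist (x n) (y n) / a n - min (t * a n) (dist (x n) (y n)) / a n"
      unfolding gpt_dist_y[where g=g and x=x and y=y and n=n, OF assms(3)[of n] assms(4)] by (simp add: diff_divide_distrib)
  qed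
  show "((\<lambda>n. dist (gpt g x y t n) (y n) / a n) \<longlongrightarrow> pd x y - min t (pd x y)) U"
    unfolding eq by (intro tendsto_diff min_ratio_tendsto pd_tendsto assms)
qed

lemma cone_geod: assumes "x \<in> S" "y \<in> S" "\<And>n. geodesic_seg UNIV dist (g n) (x n) (y n)"
  shows "geodesic_seg (cone_pts U a e) (cone_dist U a) (\<lambda>t. cls (gpt g x y t)) (cls x) (cls y)"
proof -
  have D: "cone_dist U a (cls x) (cls y) = pd x y" by (rule cd_cls[OF assms(1,2)])
  have D0: "0 \<le> pd x y" by (rule pd_nonneg[OF assms(1,2)])
  have S': "gpt g x y t \<in> S" if "t \<in> {0..pd x y}" for t using gpt_S[OF assms] that by auto
  show ?thesis unfolding geodesic_seg_def D
  proof (intro conjI ballI subsetI)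
    show "cls (gpt g x y 0) = cls x" unfolding gpt_0[OF assms(3)] ..
    show "cls (gpt g x y (pd x y)) = cls y"
      using cls_eq[OF gpt_S[OF assms D0] assms(2)] gpt_pd_y[OF assms D0] by simp
    show "z \<in> cone_pts U a e" if "z \<in> (\<lambda>t. cls (gpt g x y t)) ` {0..pd x y}" for z
      using that S' cls_in by auto
    fix s t assume st: "s \<in> {0..pd x y}" "t \<in> {0..pd x y}"
    show "cone_dist U a (cls (gpt g x y s)) (cls (gpt g x y t)) = \<bar>s - t\<bar>"
      unfolding cd_cls[OF S'[OF st(1)] S'[OF st(2)]] using gpt_pd[OF assms, of s t] st by simp
  qed
qed

end


lemma sel_simps[simp]: "sel 0 p q r = p" "sel (Suc 0) p q r = q" "sel 2 p q r = r"
  unfolding sel_def by auto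

lemma sel_cases: "(K::nat) < 3 \<Longrightarrow> P (sel 0 p q r) \<Longrightarrow> P (sel 1 p q r) \<Longrightarrow> P (sel 2 p q r) \<Longrightarrow> P (sel K p q r)"
  unfolding less3 by auto

lemma dct_use:
  fixes P1 P2 P3 :: "real^2"
  assumes "delta_cat0_triangle M d \<delta> x1 x2 x3 g1 g2 g3"
    "dist P1 P2 = d x1 x2" "dist P2 P3 = d x2 x3" "dist P3 P1 = d x3 x1"
    "K < 3" "K' < 3" "s \<in> {0..sel K (d x1 x2) (d x2 x3) (d x3 x1)}"
    "t \<in> {0..sel K' (d x1 x2) (d x2 x3) (d x3 x1)}"
  shows "d (sel K g1 g2 g3 s) (sel K' g1 g2 g3 t) \<le>
    sqrt (Qd (d x1 x2) (d x2 x3) (d x3 x1) K (s / sel K (d x1 x2) (d x2 x3) (d x3 x1))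
       K' (t / sel K' (d x1 x2) (d x2 x3) (d x3 x1))) + \<delta>"
proof -
  have A: "\<forall>(g, A, B) \<in> {(g1, P1, P2), (g2, P2, P3), (g3, P3, P1)}.
         \<forall>(g', A', B') \<in> {(g1, P1, P2), (g2, P2, P3), (g3, P3, P1)}.
         \<forall>s\<in>{0..dist A B}. \<forall>t\<in>{0..dist A' B'}.
            d (g s) (g' t) \<le> dist (cmp_pt A B s) (cmp_pt A' B' t) + \<delta>"
    using assms(1-4) unfolding delta_cat0_triangle_def by blast
  have mem: "(sel k g1 g2 g3, sel k P1 P2 P3, sel k P2 P3 P1) \<in> {(g1, P1, P2), (g2, P2, P3), (g3, P3, P1)}"
    if "k < 3" for k
    using that unfolding less3 by auto
  have ds: "dist (sel k P1 P2 P3) (sel k P2 P3 P1) = sel k (d x1 x2) (d x2 x3) (d x3 x1)" for k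
    using assms(2-4) unfolding sel_def by auto
  have "d (sel K g1 g2 g3 s) (sel K' g1 g2 g3 t) \<le>
     dist (cmp_pt (sel K P1 P2 P3) (sel K P2 P3 P1) s) (cmp_pt (sel K' P1 P2 P3) (sel K' P2 P3 P1) t) + \<delta>"
  proof -
    note A1 = bspec[OF A mem[OF assms(5)], unfolded prod.case]
    note A2 = bspec[OF A1 mem[OF assms(6)], unfolded prod.case]
    have s: "s \<in> {0..dist (sel K P1 P2 P3) (sel K P2 P3 P1)}" using assms(7) unfolding ds .
    have t: "t \<in> {0..dist (sel K' P1 P2 P3) (sel K' P2 P3 P1)}" using assms(8) unfolding ds .
    show ?thesis using bspec[OF bspec[OF A2 s] t] .
  qed
  also have "\<dots> = sqrt (Qd (d x1 x2) (d x2 x3) (d x3 x1) K (s / sel K (d x1 x2) (d x2 x3) (d x3 x1))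
       K' (t / sel K' (d x1 x2) (d x2 x3) (d x3 x1))) + \<delta>"
    unfolding dist_cmp[OF assms(5,6)] assms(2-4) ..
  finally show ?thesis .
qed

lemma dct_intro:
  assumes "\<And>(P1::real^2) P2 P3 K K' s t. dist P1 P2 = d x1 x2 \<Longrightarrow> dist P2 P3 = d x2 x3 \<Longrightarrow> dist P3 P1 = d x3 x1 \<Longrightarrow>
    K < 3 \<Longrightarrow> K' < 3 \<Longrightarrow> s \<in> {0..sel K (d x1 x2) (d x2 x3) (d x3 x1)} \<Longrightarrow>
    t \<in> {0..sel K' (d x1 x2) (d x2 x3) (d x3 x1)} \<Longrightarrow>
    d (sel K g1 g2 g3 s) (sel K' g1 g2 g3 t) \<le>
    sqrt (Qd (d x1 x2) (d x2 x3) (d x3 x1) K (s / sel K (d x1 x2) (d x2 x3) (d x3 x1))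
       K' (t / sel K' (d x1 x2) (d x2 x3) (d x3 x1))) + \<delta>"
  shows "delta_cat0_triangle M d \<delta> x1 x2 x3 g1 g2 g3"
  unfolding delta_cat0_triangle_def
proof (intro allI impI)
  fix P1 P2 P3 :: "real^2"
  assume h: "dist P1 P2 = d x1 x2 \<and> dist P2 P3 = d x2 x3 \<and> dist P3 P1 = d x3 x1"
  have ds: "dist (sel k P1 P2 P3) (sel k P2 P3 P1) = sel k (d x1 x2) (d x2 x3) (d x3 x1)" for k
    using h unfolding sel_def by auto
  have B: "d (sel K g1 g2 g3 s) (sel K' g1 g2 g3 t) \<le>
     dist (cmp_pt (sel K P1 P2 P3) (sel K P2 P3 P1) s) (cmp_pt (sel K' P1 P2 P3) (sel K' P2 P3 P1) t) + \<delta>"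
    if "K < 3" "K' < 3" "s \<in> {0..dist (sel K P1 P2 P3) (sel K P2 P3 P1)}"
      "t \<in> {0..dist (sel K' P1 P2 P3) (sel K' P2 P3 P1)}" for K K' s t
    using assms[of P1 P2 P3 K K' s t] h that unfolding ds dist_cmp[OF that(1,2)] by auto
  have mem: "\<exists>k<3. x = (sel k g1 g2 g3, sel k P1 P2 P3, sel k P2 P3 P1)"
    if "x \<in> {(g1, P1, P2), (g2, P2, P3), (g3, P3, P1)}" for x
    using that by (auto intro: exI[of _ 0] exI[of _ 1] exI[of _ 2])
  show "\<forall>(g, A, B)\<in>{(g1, P1, P2), (g2, P2, P3), (g3, P3, P1)}.
            \<forall>(g', A', B')\<in>{(g1, P1, P2), (g2, P2, P3), (g3, P3, P1)}.
               \<forall>s\<in>{0..dist A B}. \<forall>t\<in>{0..dist A' B'}. d (g s) (g' t) \<le> dist (cmp_pt A B s) (cmp_pt A' B' t) + \<delta>"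
  proof (rule ballI)
    fix x assume x: "x \<in> {(g1, P1, P2), (g2, P2, P3), (g3, P3, P1)}"
    obtain k where k: "k < 3" "x = (sel k g1 g2 g3, sel k P1 P2 P3, sel k P2 P3 P1)" using mem[OF x] by blast
    show "case x of (g, A, B) \<Rightarrow> \<forall>(g', A', B')\<in>{(g1, P1, P2), (g2, P2, P3), (g3, P3, P1)}.
               \<forall>s\<in>{0..dist A B}. \<forall>t\<in>{0..dist A' B'}. d (g s) (g' t) \<le> dist (cmp_pt A B s) (cmp_pt A' B' t) + \<delta>"
      unfolding k(2) prod.case
    proof (rule ballI)
      fix x' assume x': "x' \<in> {(g1, P1, P2), (g2, P2, P3), (g3, P3, P1)}"
      obtain k' where k': "k' < 3" "x' = (sel k' g1 g2 g3, sel k' P1 P2 P3, sel k' P2 P3 P1)" using mem[OF x'] by blast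
      show "case x' of (g', A', B') \<Rightarrow> \<forall>s\<in>{0..dist (sel k P1 P2 P3) (sel k P2 P3 P1)}. \<forall>t\<in>{0..dist A' B'}.
          d (sel k g1 g2 g3 s) (g' t) \<le> dist (cmp_pt (sel k P1 P2 P3) (sel k P2 P3 P1) s) (cmp_pt A' B' t) + \<delta>"
        unfolding k'(2) prod.case using B[OF k(1) k'(1)] by blast
    qed
  qed
qed

lemma Qd_approx:
  fixes L b c u \<tau> \<epsilon> :: real
  assumes "0 \<le> L" "0 \<le> b" "0 \<le> c" "0 \<le> \<tau>" "\<tau> \<le> L" "0 \<le> \<epsilon>"
    "c \<le> \<tau> + \<epsilon>" "b \<le> L - \<tau> + \<epsilon>"
  shows "Qd L b c 0 (\<tau> / L) 2 (0 / c) \<le> L * \<epsilon> + \<epsilon>\<^sup>2"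
proof -
  define u where "u = \<tau> / L"
  have tu: "\<tau> = u * L" and u01: "0 \<le> u" "u \<le> 1"
    using assms unfolding u_def by (cases "L = 0"; auto simp: divide_simps)+
  have Q: "Qd L b c 0 u 2 0 = - u * (1 - u) * L\<^sup>2 + u * b\<^sup>2 + (1 - u) * c\<^sup>2"
    unfolding Qd_def wc_def Let_def by (simp add: algebra_simps power2_eq_square)
  have b2: "b\<^sup>2 \<le> ((1 - u) * L + \<epsilon>)\<^sup>2" using assms tu by (intro power_mono) (auto simp: algebra_simps)
  have c2: "c\<^sup>2 \<le> (u * L + \<epsilon>)\<^sup>2" using assms tu by (intro power_mono) auto
  have "Qd L b c 0 u 2 0 \<le> - u * (1 - u) * L\<^sup>2 + u * ((1 - u) * L + \<epsilon>)\<^sup>2 + (1 - u) * (u * L + \<epsilon>)\<^sup>2"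
    unfolding Q using mult_left_mono[OF b2 u01(1)] mult_left_mono[OF c2, of "1 - u"] u01 by simp
  also have "\<dots> = 4 * (u * (1 - u)) * (L * \<epsilon>) + \<epsilon>\<^sup>2"
    by (simp add: algebra_simps power2_eq_square)
  also have "\<dots> \<le> 1 * (L * \<epsilon>) + \<epsilon>\<^sup>2"
  proof -
    have "0 \<le> (2 * u - 1)\<^sup>2" by simp
    then have "4 * (u * (1 - u)) \<le> 1" by (simp add: algebra_simps power2_eq_square)
    then show ?thesis using assms by (intro add_right_mono mult_right_mono) auto
  qed
  finally show ?thesis unfolding u_def by simp
qed

lemma config_metric:
  fixes x y z :: "'a::metric_space"
  shows "\<exists>P1 P2 P3 :: real^2. dist P1 P2 = dist x y \<and> dist P2 P3 = dist y z \<and> dist P3 P1 = dist z x"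
proof (rule exists_config)
  show "dist x y \<le> dist y z + dist z x" using dist_triangle[of x y z] by (simp add: dist_commute)
  show "dist y z \<le> dist x y + dist z x" using dist_triangle[of y z x] by (simp add: dist_commute)
  show "dist z x \<le> dist x y + dist y z" using dist_triangle[of z x y] by (simp add: dist_commute)
qed auto

lemma approx_pt:
  fixes y z m :: "'a::metric_space"
  assumes geo: "geodesic_space (UNIV :: 'a::metric_space set) dist"
    and dc: "delta_cat0_on UNIV dist \<delta> V" and V: "y \<in> V" "z \<in> V" "m \<in> V"
    and g: "geodesic_seg UNIV dist g y z" and tau: "0 \<le> \<tau>" "\<tau> \<le> dist y z" and eps: "0 \<le> \<epsilon>"
    and d1: "dist y m \<le> \<tau> + \<epsilon>" and d2: "dist m z \<le> dist y z - \<tau> + \<epsilon>"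
  shows "dist m (g \<tau>) \<le> sqrt (dist y z * \<epsilon> + \<epsilon>\<^sup>2) + \<delta>"
proof -
  obtain h2 where h2: "geodesic_seg UNIV dist h2 z m" using geo unfolding geodesic_space_def by blast
  obtain h3 where h3: "geodesic_seg UNIV dist h3 m y" using geo unfolding geodesic_space_def by blast
  have T: "delta_cat0_triangle UNIV dist \<delta> y z m g h2 h3"
    using dc V g h2 h3 unfolding delta_cat0_on_def by blast
  obtain P1 P2 P3 :: "real^2" where P: "dist P1 P2 = dist y z" "dist P2 P3 = dist z m" "dist P3 P1 = dist m y"
    using config_metric[of y z m] by blast
  have "dist (sel 0 g h2 h3 \<tau>) (sel 2 g h2 h3 0) \<le>
    sqrt (Qd (dist y z) (dist z m) (dist m y) 0 (\<tau> / sel 0 (dist y z) (dist z m) (dist m y))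
       2 (0 / sel 2 (dist y z) (dist z m) (dist m y))) + \<delta>"
    by (rule dct_use[OF T P]) (use tau in auto)
  then have "dist (g \<tau>) m \<le> sqrt (Qd (dist y z) (dist z m) (dist m y) 0 (\<tau> / dist y z) 2 (0 / dist m y)) + \<delta>"
    using geo_0[OF h3] by simp
  also have "\<dots> \<le> sqrt (dist y z * \<epsilon> + \<epsilon>\<^sup>2) + \<delta>"
    using Qd_approx[of "dist y z" "dist z m" "dist m y" \<tau> \<epsilon>] tau eps d1 d2
    by (simp add: dist_commute)
  finally show ?thesis by (simp add: dist_commute)
qed

lemma wc_tendsto: "(u \<longlongrightarrow> u0) F \<Longrightarrow> ((\<lambda>n. wc i K (u n)) \<longlongrightarrow> wc i K u0) F"
  unfolding wc_def by (cases "i = K"; cases "i = Suc K mod 3") (auto intro!: tendsto_intros)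

lemma Qd_tendsto:
  assumes "(l1 \<longlongrightarrow> m1) F" "(l2 \<longlongrightarrow> m2) F" "(l3 \<longlongrightarrow> m3) F" "(u \<longlongrightarrow> u0) F" "(v \<longlongrightarrow> v0) F"
  shows "((\<lambda>n. Qd (l1 n) (l2 n) (l3 n) K (u n) K' (v n)) \<longlongrightarrow> Qd m1 m2 m3 K u0 K' v0) F"
  unfolding Qd_def Let_def by (intro tendsto_intros wc_tendsto assms)

lemma scale3: "(c::real) \<noteq> 0 \<Longrightarrow> - (p * (x / c)\<^sup>2 + q * (y / c)\<^sup>2 + r * (z / c)\<^sup>2) = - (p * x\<^sup>2 + q * y\<^sup>2 + r * z\<^sup>2) / c\<^sup>2"
  by (simp add: power_divide field_simps)

lemma Qd_scale: "(c::real) \<noteq> 0 \<Longrightarrow> Qd (l1 / c) (l2 / c) (l3 / c) K u K' v = Qd l1 l2 l3 K u K' v / c\<^sup>2"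
  unfolding Qd_def Let_def by (rule scale3)

lemma sel_tendsto: "(f1 \<longlongrightarrow> m1) F \<Longrightarrow> (f2 \<longlongrightarrow> m2) F \<Longrightarrow> (f3 \<longlongrightarrow> m3) F \<Longrightarrow>
  ((\<lambda>n. sel K (f1 n) (f2 n) (f3 n)) \<longlongrightarrow> sel K m1 m2 m3) F"
  unfolding sel_def by auto

lemma sel_div: "sel K p q r / (c::real) = sel K (p / c) (q / c) (r / c)"
  unfolding sel_def by auto

lemma sel_ge: "0 \<le> p \<Longrightarrow> 0 \<le> q \<Longrightarrow> 0 \<le> (r::real) \<Longrightarrow> 0 \<le> sel K p q r"
  unfolding sel_def by auto

context cone begin

lemma weight_tendsto:
  assumes L: "((\<lambda>n. L n / a n) \<longlongrightarrow> l) U" and s: "0 \<le> s" "s \<le> l" and L0: "\<And>n. 0 \<le> L n"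
  shows "((\<lambda>n. min (s * a n) (L n) / L n) \<longlongrightarrow> s / l) U"
proof (cases "l = 0")
  case True
  then have "s = 0" using s by simp
  then show ?thesis using L0 True by (simp add: min_def)
next
  case False
  then have lp: "l > 0" using s by simp
  have ev: "eventually (\<lambda>n. 0 < L n / a n) U" using order_tendstoD(1)[OF L lp] .
  have "((\<lambda>n. (min (s * a n) (L n) / a n) / (L n / a n)) \<longlongrightarrow> min s l / l) U"
    by (intro tendsto_divide min_ratio_tendsto L s) (use lp in simp)
  then have "((\<lambda>n. (min (s * a n) (L n) / a n) / (L n / a n)) \<longlongrightarrow> s / l) U" using s by simp
  then show ?thesis
  proof (rule Lim_transform_eventually)
    show "eventually (\<lambda>n. min (s * a n) (L n) / a n / (L n / a n) = min (s * a n) (L n) / L n) U"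
      using ev by (rule eventually_mono) (use apos in \<open>auto simp: divide_simps\<close>)
  qed
qed

lemma Qlim:
  assumes L1: "((\<lambda>n. L1 n / a n) \<longlongrightarrow> l1) U" and L2: "((\<lambda>n. L2 n / a n) \<longlongrightarrow> l2) U"
    and L3: "((\<lambda>n. L3 n / a n) \<longlongrightarrow> l3) U"
    and nn: "\<And>n. 0 \<le> L1 n" "\<And>n. 0 \<le> L2 n" "\<And>n. 0 \<le> L3 n"
    and st: "s \<in> {0..sel K l1 l2 l3}" "t \<in> {0..sel K' l1 l2 l3}"
  shows "((\<lambda>n. sqrt (Qd (L1 n) (L2 n) (L3 n) K (min (s * a n) (sel K (L1 n) (L2 n) (L3 n)) / sel K (L1 n) (L2 n) (L3 n))
      K' (min (t * a n) (sel K' (L1 n) (L2 n) (L3 n)) / sel K' (L1 n) (L2 n) (L3 n))) / a n)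
    \<longlongrightarrow> sqrt (Qd l1 l2 l3 K (s / sel K l1 l2 l3) K' (t / sel K' l1 l2 l3))) U"
proof -
  have eq: "sqrt (Qd (L1 n) (L2 n) (L3 n) K u K' v) / a n = sqrt (Qd (L1 n / a n) (L2 n / a n) (L3 n / a n) K u K' v)"
    for n u v
  proof -
    have "a n \<noteq> 0" using apos[of n] by simp
    then have "sqrt (Qd (L1 n / a n) (L2 n / a n) (L3 n / a n) K u K' v) = sqrt (Qd (L1 n) (L2 n) (L3 n) K u K' v / (a n)\<^sup>2)"
      by (simp add: Qd_scale)
    also have "\<dots> = sqrt (Qd (L1 n) (L2 n) (L3 n) K u K' v) / a n"
      using apos[of n] by (simp add: real_sqrt_divide)
    finally show ?thesis by simp
  qed
  have w: "((\<lambda>n. min (s * a n) (sel K (L1 n) (L2 n) (L3 n)) / sel K (L1 n) (L2 n) (L3 n)) \<longlongrightarrow> s / sel K l1 l2 l3) U"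
    if "s \<in> {0..sel K l1 l2 l3}" for s K
    by (rule weight_tendsto) (use that nn in \<open>auto simp: sel_div intro!: sel_tendsto L1 L2 L3 sel_ge\<close>)
  show ?thesis unfolding eq
    by (intro tendsto_real_sqrt Qd_tendsto L1 L2 L3 w st)
qed

end


lemma max_div: "0 < (c::real) \<Longrightarrow> max 0 (max p q) / c = max 0 (max (p / c) (q / c))"
  by (auto simp: max_def divide_simps)

lemma sqrt_div: "0 < (c::real) \<Longrightarrow> 0 \<le> L \<Longrightarrow> 0 \<le> \<epsilon> \<Longrightarrow>
  sqrt (L * \<epsilon> + \<epsilon>\<^sup>2) / c = sqrt ((L / c) * (\<epsilon> / c) + (\<epsilon> / c)\<^sup>2)"
proof -
  assume c: "0 < c" and h: "0 \<le> L" "0 \<le> \<epsilon>"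
  have "(L / c) * (\<epsilon> / c) + (\<epsilon> / c)\<^sup>2 = (L * \<epsilon> + \<epsilon>\<^sup>2) / c\<^sup>2"
    using c by (simp add: power2_eq_square field_simps)
  then show ?thesis using c by (simp add: real_sqrt_divide)
qed

locale cone_f = cone U a e for U a and e :: "nat \<Rightarrow> 'a::metric_space" +
  fixes f :: "real \<Rightarrow> real"
  assumes geo: "geodesic_space (UNIV :: 'a set) dist"
    and flim: "((\<lambda>r. f r / r) \<longlongrightarrow> 0) at_top"
    and fcat: "\<And>r (c::'a). r > 0 \<Longrightarrow> delta_cat0_on UNIV dist (f r) (ball c r)"
begin

lemma f_lim: assumes "R > 0" shows "((\<lambda>n. f (R * a n) / a n) \<longlongrightarrow> 0) U"
proof -
  have Ra: "filterlim (\<lambda>n. R * a n) at_top U"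
    by (rule filterlim_tendsto_pos_mult_at_top[OF tendsto_const assms aU])
  have "((\<lambda>n. f (R * a n) / (R * a n)) \<longlongrightarrow> 0) U"
    using filterlim_compose[OF flim Ra] by simp
  then have "((\<lambda>n. R * (f (R * a n) / (R * a n))) \<longlongrightarrow> R * 0) U" by (intro tendsto_mult tendsto_const)
  moreover have "R * (f (R * a n) / (R * a n)) = f (R * a n) / a n" for n
    using assms apos[of n] by simp
  ultimately show ?thesis by simp
qed

lemma S_bound: "x \<in> S \<Longrightarrow> \<exists>B. eventually (\<lambda>n. dist (x n) (e n) / a n \<le> B) U"
  using inS by blast

lemma ball_ev: assumes "eventually (\<lambda>n. dist (x n) (e n) / a n \<le> B) U" "B < R"
  shows "eventually (\<lambda>n. x n \<in> ball (e n) (R * a n)) U"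
  using assms(1)
proof (rule eventually_mono)
  fix n assume "dist (x n) (e n) / a n \<le> B"
  then have "dist (x n) (e n) / a n < R" using assms(2) by simp
  then show "x n \<in> ball (e n) (R * a n)" using apos[of n] by (simp add: divide_simps dist_commute)
qed

lemma ball3: assumes "x \<in> S" "y \<in> S" "z \<in> S"
  obtains R where "R > 0" "eventually (\<lambda>n. x n \<in> ball (e n) (R * a n) \<and> y n \<in> ball (e n) (R * a n)
     \<and> z n \<in> ball (e n) (R * a n)) U"
proof -
  obtain B1 where B1: "eventually (\<lambda>n. dist (x n) (e n) / a n \<le> B1) U" using S_bound[OF assms(1)] by blast
  obtain B2 where B2: "eventually (\<lambda>n. dist (y n) (e n) / a n \<le> B2) U" using S_bound[OF assms(2)] by blast
  obtain B3 where B3: "eventually (\<lambda>n. dist (z n) (e n) / a n \<le> B3) U" using S_bound[OF assms(3)] by blast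
  note B = B1 B2 B3
  define R where "R = max 1 (max B1 (max B2 B3)) + 1"
  have RR: "R > 0" "B1 < R" "B2 < R" "B3 < R" unfolding R_def by auto
  have "eventually (\<lambda>n. x n \<in> ball (e n) (R * a n) \<and> y n \<in> ball (e n) (R * a n)
     \<and> z n \<in> ball (e n) (R * a n)) U"
    by (intro eventually_conj ball_ev[OF B(1) RR(2)] ball_ev[OF B(2) RR(3)] ball_ev[OF B(3) RR(4)])
  then show ?thesis using that RR(1) by blast
qed

lemma canon:
  assumes y: "y \<in> S" and z: "z \<in> S"
    and c: "geodesic_seg (cone_pts U a e) (cone_dist U a) c (cls y) (cls z)"
    and t: "t \<in> {0..pd y z}" and h: "\<And>n. geodesic_seg UNIV dist (h n) (y n) (z n)"
  shows "c t = cls (gpt h y z t)"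
proof -
  define D where "D = pd y z"
  have cD: "cone_dist U a (cls y) (cls z) = D" unfolding D_def by (rule cd_cls[OF y z])
  have c0: "c 0 = cls y" and c1: "c D = cls z" and cim: "c ` {0..D} \<subseteq> cone_pts U a e"
    and cd: "\<And>s r. s \<in> {0..D} \<Longrightarrow> r \<in> {0..D} \<Longrightarrow> cone_dist U a (c s) (c r) = \<bar>s - r\<bar>"
    using c unfolding geodesic_seg_def cD by auto
  have tD: "t \<in> {0..D}" using t unfolding D_def .
  have D0: "0 \<le> D" using tD by simp
  obtain m where m: "m \<in> S" "c t = cls m" using cim tD rep by blast
  have ym: "pd y m = t" using cd[of 0 t] tD D0 c0 m cd_cls[OF y m(1)] by simp
  have mz: "pd m z = D - t" using cd[of t D] tD D0 c1 m cd_cls[OF m(1) z] by simp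
  define L where "L n = dist (y n) (z n)" for n
  define \<tau> where "\<tau> n = min (t * a n) (L n)" for n
  define \<epsilon> where "\<epsilon> n = max 0 (max (dist (y n) (m n) - \<tau> n) (dist (m n) (z n) - (L n - \<tau> n)))" for n
  have L0: "0 \<le> L n" for n unfolding L_def by simp
  have \<tau>0: "0 \<le> \<tau> n" "\<tau> n \<le> L n" for n unfolding \<tau>_def using tD apos[of n] L0[of n] by auto
  have \<epsilon>0: "0 \<le> \<epsilon> n" for n unfolding \<epsilon>_def by simp
  have Ltend: "((\<lambda>n. L n / a n) \<longlongrightarrow> D) U" unfolding L_def D_def by (rule pd_tendsto[OF y z])
  have \<tau>tend: "((\<lambda>n. \<tau> n / a n) \<longlongrightarrow> min t D) U" unfolding \<tau>_def
    by (rule min_ratio_tendsto[OF Ltend]) (use tD in simp)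
  have ymt: "((\<lambda>n. dist (y n) (m n) / a n) \<longlongrightarrow> t) U" using pd_tendsto[OF y m(1)] ym by simp
  have mzt: "((\<lambda>n. dist (m n) (z n) / a n) \<longlongrightarrow> D - t) U" using pd_tendsto[OF m(1) z] mz by simp
  have \<epsilon>tend: "((\<lambda>n. \<epsilon> n / a n) \<longlongrightarrow> 0) U"
  proof -
    have "((\<lambda>n. max 0 (max (dist (y n) (m n) / a n - \<tau> n / a n) (dist (m n) (z n) / a n - (L n / a n - \<tau> n / a n))))
       \<longlongrightarrow> max 0 (max (t - min t D) ((D - t) - (D - min t D)))) U"
      by (intro tendsto_max tendsto_const tendsto_diff ymt mzt Ltend \<tau>tend)
    moreover have "max 0 (max (t - min t D) ((D - t) - (D - min t D))) = 0" using tD by simp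
    moreover have "\<epsilon> n / a n = max 0 (max (dist (y n) (m n) / a n - \<tau> n / a n) (dist (m n) (z n) / a n - (L n / a n - \<tau> n / a n)))" for n
      unfolding \<epsilon>_def using apos[of n] by (simp add: max_div diff_divide_distrib)
    ultimately show ?thesis by simp
  qed
  obtain R where R: "R > 0" "eventually (\<lambda>n. y n \<in> ball (e n) (R * a n) \<and> z n \<in> ball (e n) (R * a n)
     \<and> m n \<in> ball (e n) (R * a n)) U" using ball3[OF y z m(1)] by blast
  have ev: "eventually (\<lambda>n. dist (m n) (gpt h y z t n) / a n \<le>
      sqrt ((L n / a n) * (\<epsilon> n / a n) + (\<epsilon> n / a n)\<^sup>2) + f (R * a n) / a n) U"
    using R(2)
  proof (rule eventually_mono)
    fix n assume b: "y n \<in> ball (e n) (R * a n) \<and> z n \<in> ball (e n) (R * a n) \<and> m n \<in> ball (e n) (R * a n)"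
    have Ra: "R * a n > 0" using R(1) apos[of n] by simp
    have "dist (m n) (h n (\<tau> n)) \<le> sqrt (dist (y n) (z n) * \<epsilon> n + (\<epsilon> n)\<^sup>2) + f (R * a n)"
    proof (rule approx_pt[OF geo fcat[OF Ra]])
      show "y n \<in> ball (e n) (R * a n)" "z n \<in> ball (e n) (R * a n)" "m n \<in> ball (e n) (R * a n)" using b by auto
      show "geodesic_seg UNIV dist (h n) (y n) (z n)" by (rule h)
      show "0 \<le> \<tau> n" "\<tau> n \<le> dist (y n) (z n)" "0 \<le> \<epsilon> n" using \<tau>0[of n] \<epsilon>0[of n] unfolding L_def by auto
      show "dist (y n) (m n) \<le> \<tau> n + \<epsilon> n" unfolding \<epsilon>_def by simp
      show "dist (m n) (z n) \<le> dist (y n) (z n) - \<tau> n + \<epsilon> n" unfolding \<epsilon>_def L_def by simp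
    qed
    then have "dist (m n) (gpt h y z t n) / a n \<le> (sqrt (L n * \<epsilon> n + (\<epsilon> n)\<^sup>2) + f (R * a n)) / a n"
      unfolding gpt_def \<tau>_def[symmetric] L_def[symmetric] using apos[of n] by (intro divide_right_mono) auto
    also have "\<dots> = sqrt ((L n / a n) * (\<epsilon> n / a n) + (\<epsilon> n / a n)\<^sup>2) + f (R * a n) / a n"
      using sqrt_div[OF apos L0 \<epsilon>0] by (simp add: add_divide_distrib)
    finally show "dist (m n) (gpt h y z t n) / a n \<le> sqrt ((L n / a n) * (\<epsilon> n / a n) + (\<epsilon> n / a n)\<^sup>2) + f (R * a n) / a n" .
  qed
  have rt: "((\<lambda>n. sqrt ((L n / a n) * (\<epsilon> n / a n) + (\<epsilon> n / a n)\<^sup>2) + f (R * a n) / a n) \<longlongrightarrow>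
      sqrt (D * 0 + 0\<^sup>2) + 0) U"
    by (intro tendsto_add tendsto_real_sqrt tendsto_mult tendsto_power Ltend \<epsilon>tend f_lim R(1))
  have gS: "gpt h y z t \<in> S" using gpt_S[OF y z h] tD by simp
  have "pd m (gpt h y z t) = 0"
  proof (rule pd_eq, rule tendsto_sandwich[OF _ ev])
    show "eventually (\<lambda>n. 0 \<le> dist (m n) (gpt h y z t n) / a n) U"
      using apos by (auto intro!: always_eventually simp: less_imp_le)
    show "((\<lambda>n. 0) \<longlongrightarrow> 0) U" by simp
    show "((\<lambda>n. sqrt ((L n / a n) * (\<epsilon> n / a n) + (\<epsilon> n / a n)\<^sup>2) + f (R * a n) / a n) \<longlongrightarrow> 0) U"
      using rt by simp
  qed
  then show ?thesis using m cls_eq[OF m(1) gS] by simp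
qed

definition Gs :: "(nat \<Rightarrow> 'a) \<Rightarrow> (nat \<Rightarrow> 'a) \<Rightarrow> nat \<Rightarrow> real \<Rightarrow> 'a" where
  "Gs x y n = (SOME \<gamma>. geodesic_seg UNIV dist \<gamma> (x n) (y n))"

lemma Gs_geo: "geodesic_seg UNIV dist (Gs x y n) (x n) (y n)"
proof -
  have "\<exists>\<gamma>. geodesic_seg UNIV dist \<gamma> (x n) (y n)" using geo by (simp add: geodesic_space_def)
  then show ?thesis unfolding Gs_def by (rule someI_ex)
qed

lemma cone_geodesic_space: "geodesic_space (cone_pts U a e) (cone_dist U a)"
  unfolding geodesic_space_def
proof (intro ballI)
  fix P Q assume P: "P \<in> cone_pts U a e" and Q: "Q \<in> cone_pts U a e"
  obtain x where x: "x \<in> S" "P = cls x" using rep[OF P] by blast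
  obtain y where y: "y \<in> S" "Q = cls y" using rep[OF Q] by blast
  show "\<exists>\<gamma>. geodesic_seg (cone_pts U a e) (cone_dist U a) \<gamma> P Q"
    using cone_geod[OF x(1) y(1) Gs_geo[of x y]] x y by blast
qed

lemma sel_app: "sel K f1 f2 f3 n = sel K (f1 n) (f2 n) (f3 n)"
  unfolding sel_def by auto

lemma sel_pd: "sel K (pd x1 x2) (pd x2 x3) (pd x3 x1) = pd (sel K x1 x2 x3) (sel K x2 x3 x1)"
  unfolding sel_def by auto

lemma sel_dist: "sel K (dist (x1 n) (x2 n)) (dist (x2 n) (x3 n)) (dist (x3 n) (x1 n)) =
   dist (sel K x1 x2 x3 n) (sel K x2 x3 x1 n)"
  unfolding sel_def by auto

lemma sel_Gs: "sel K (Gs x1 x2) (Gs x2 x3) (Gs x3 x1) = Gs (sel K x1 x2 x3) (sel K x2 x3 x1)"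
  unfolding sel_def by auto

lemma sel_in: "x1 \<in> A \<Longrightarrow> x2 \<in> A \<Longrightarrow> x3 \<in> A \<Longrightarrow> sel K x1 x2 x3 \<in> A"
  unfolding sel_def by auto

lemma cone_delta: "delta_cat0_on (cone_pts U a e) (cone_dist U a) 0 (cone_pts U a e)"
  unfolding delta_cat0_on_def
proof (intro ballI allI impI)
  fix X1 X2 X3 g1 g2 g3
  assume X: "X1 \<in> cone_pts U a e" "X2 \<in> cone_pts U a e" "X3 \<in> cone_pts U a e"
    and gg: "geodesic_seg (cone_pts U a e) (cone_dist U a) g1 X1 X2 \<and> geodesic_seg (cone_pts U a e) (cone_dist U a) g2 X2 X3 \<and>
       geodesic_seg (cone_pts U a e) (cone_dist U a) g3 X3 X1"
  obtain x1 where x1: "x1 \<in> S" "X1 = cls x1" using rep[OF X(1)] by blast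
  obtain x2 where x2: "x2 \<in> S" "X2 = cls x2" using rep[OF X(2)] by blast
  obtain x3 where x3: "x3 \<in> S" "X3 = cls x3" using rep[OF X(3)] by blast
  have cd12: "cone_dist U a X1 X2 = pd x1 x2" using cd_cls x1 x2 by simp
  have cd23: "cone_dist U a X2 X3 = pd x2 x3" using cd_cls x2 x3 by simp
  have cd31: "cone_dist U a X3 X1 = pd x3 x1" using cd_cls x3 x1 by simp
  define xs where "xs k = sel k x1 x2 x3" for k
  define ys where "ys k = sel k x2 x3 x1" for k
  have xsS: "xs k \<in> S" "ys k \<in> S" for k unfolding xs_def ys_def using x1 x2 x3 by (auto intro: sel_in)
  have gk: "geodesic_seg (cone_pts U a e) (cone_dist U a) (sel k g1 g2 g3) (cls (xs k)) (cls (ys k))" if "k < 3" for k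
    using that gg x1 x2 x3 unfolding xs_def ys_def less3 by auto
  obtain R where R: "R > 0" "eventually (\<lambda>n. x1 n \<in> ball (e n) (R * a n) \<and> x2 n \<in> ball (e n) (R * a n)
     \<and> x3 n \<in> ball (e n) (R * a n)) U" using ball3[OF x1(1) x2(1) x3(1)] by blast
  define L1 where "L1 n = dist (x1 n) (x2 n)" for n
  define L2 where "L2 n = dist (x2 n) (x3 n)" for n
  define L3 where "L3 n = dist (x3 n) (x1 n)" for n
  show "delta_cat0_triangle (cone_pts U a e) (cone_dist U a) 0 X1 X2 X3 g1 g2 g3"
  proof (rule dct_intro, unfold cd12 cd23 cd31)
    fix P1 P2 P3 :: "real^2" and K K' s t
    assume KK: "K < 3" "K' < 3" and s: "s \<in> {0..sel K (pd x1 x2) (pd x2 x3) (pd x3 x1)}"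
      and t: "t \<in> {0..sel K' (pd x1 x2) (pd x2 x3) (pd x3 x1)}"
    have s': "s \<in> {0..pd (xs K) (ys K)}" using s unfolding sel_pd xs_def ys_def .
    have t': "t \<in> {0..pd (xs K') (ys K')}" using t unfolding sel_pd xs_def ys_def .
    define p where "p = gpt (Gs (xs K) (ys K)) (xs K) (ys K) s"
    define q where "q = gpt (Gs (xs K') (ys K')) (xs K') (ys K') t"
    have pS: "p \<in> S" unfolding p_def using gpt_S[OF xsS(1)[of K] xsS(2)[of K] Gs_geo[of "xs K" "ys K"]] s' by simp
    have qS: "q \<in> S" unfolding q_def using gpt_S[OF xsS(1)[of K'] xsS(2)[of K'] Gs_geo[of "xs K'" "ys K'"]] t' by simp
    have gs: "sel K g1 g2 g3 s = cls p" unfolding p_def by (rule canon[OF xsS(1)[of K] xsS(2)[of K] gk[OF KK(1)] s' Gs_geo[of "xs K" "ys K"]])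
    have gt: "sel K' g1 g2 g3 t = cls q" unfolding q_def by (rule canon[OF xsS(1)[of K'] xsS(2)[of K'] gk[OF KK(2)] t' Gs_geo[of "xs K'" "ys K'"]])
    define sn where "sn n = min (s * a n) (sel K (L1 n) (L2 n) (L3 n))" for n
    define tn where "tn n = min (t * a n) (sel K' (L1 n) (L2 n) (L3 n))" for n
    have pn: "p n = sel K (Gs x1 x2 n) (Gs x2 x3 n) (Gs x3 x1 n) (sn n)" for n
      unfolding p_def gpt_def sn_def L1_def L2_def L3_def sel_dist xs_def ys_def sel_Gs[symmetric] by (simp add: sel_app)
    have qn: "q n = sel K' (Gs x1 x2 n) (Gs x2 x3 n) (Gs x3 x1 n) (tn n)" for n
      unfolding q_def gpt_def tn_def L1_def L2_def L3_def sel_dist xs_def ys_def sel_Gs[symmetric] by (simp add: sel_app)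
    have ev: "eventually (\<lambda>n. dist (p n) (q n) / a n \<le>
        sqrt (Qd (L1 n) (L2 n) (L3 n) K (sn n / sel K (L1 n) (L2 n) (L3 n)) K' (tn n / sel K' (L1 n) (L2 n) (L3 n))) / a n
        + f (R * a n) / a n) U"
      using R(2)
    proof (rule eventually_mono)
      fix n assume b: "x1 n \<in> ball (e n) (R * a n) \<and> x2 n \<in> ball (e n) (R * a n) \<and> x3 n \<in> ball (e n) (R * a n)"
      have Ra: "R * a n > 0" using R(1) apos[of n] by simp
      have T: "delta_cat0_triangle UNIV dist (f (R * a n)) (x1 n) (x2 n) (x3 n) (Gs x1 x2 n) (Gs x2 x3 n) (Gs x3 x1 n)"
        using fcat[OF Ra, of "e n"] b Gs_geo unfolding delta_cat0_on_def by blast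
      obtain P1 P2 P3 :: "real^2" where P: "dist P1 P2 = dist (x1 n) (x2 n)" "dist P2 P3 = dist (x2 n) (x3 n)"
        "dist P3 P1 = dist (x3 n) (x1 n)" using config_metric by blast
      have L0: "0 \<le> sel k (L1 n) (L2 n) (L3 n)" for k unfolding L1_def L2_def L3_def by (rule sel_ge) auto
      have "dist (p n) (q n) \<le> sqrt (Qd (L1 n) (L2 n) (L3 n) K (sn n / sel K (L1 n) (L2 n) (L3 n)) K' (tn n / sel K' (L1 n) (L2 n) (L3 n))) + f (R * a n)"
        unfolding pn qn L1_def L2_def L3_def
        by (rule dct_use[OF T P KK]) (use s t apos[of n] L0 in \<open>auto simp: sn_def tn_def L1_def L2_def L3_def\<close>)
      then show "dist (p n) (q n) / a n \<le>
        sqrt (Qd (L1 n) (L2 n) (L3 n) K (sn n / sel K (L1 n) (L2 n) (L3 n)) K' (tn n / sel K' (L1 n) (L2 n) (L3 n))) / a n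
        + f (R * a n) / a n"
        using apos[of n] by (simp add: add_divide_distrib[symmetric] divide_right_mono)
    qed
    have lim: "((\<lambda>n. sqrt (Qd (L1 n) (L2 n) (L3 n) K (sn n / sel K (L1 n) (L2 n) (L3 n)) K' (tn n / sel K' (L1 n) (L2 n) (L3 n))) / a n
        + f (R * a n) / a n) \<longlongrightarrow> sqrt (Qd (pd x1 x2) (pd x2 x3) (pd x3 x1) K (s / sel K (pd x1 x2) (pd x2 x3) (pd x3 x1))
            K' (t / sel K' (pd x1 x2) (pd x2 x3) (pd x3 x1))) + 0) U"
      unfolding sn_def tn_def
      by (intro tendsto_add f_lim R(1) Qlim s t) (auto simp: L1_def L2_def L3_def intro: pd_tendsto x1 x2 x3)
    have "pd p q \<le> sqrt (Qd (pd x1 x2) (pd x2 x3) (pd x3 x1) K (s / sel K (pd x1 x2) (pd x2 x3) (pd x3 x1))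
            K' (t / sel K' (pd x1 x2) (pd x2 x3) (pd x3 x1))) + 0"
      by (rule tendsto_le[OF Unb lim pd_tendsto[OF pS qS] ev])
    then show "cone_dist U a (sel K g1 g2 g3 s) (sel K' g1 g2 g3 t)
       \<le> sqrt (Qd (pd x1 x2) (pd x2 x3) (pd x3 x1) K (s / sel K (pd x1 x2) (pd x2 x3) (pd x3 x1))
            K' (t / sel K' (pd x1 x2) (pd x2 x3) (pd x3 x1))) + 0"
      unfolding gs gt cd_cls[OF pS qS] .
  qed
qed

lemma cone_CAT0: "CAT0_space (cone_pts U a e) (cone_dist U a)"
  unfolding CAT0_space_def using cone_geodesic_space cone_delta by blast

end


lemma geo_pt_dist: assumes "geodesic_seg UNIV dist g x y" "s \<in> {0..dist x y}"
  shows "dist (g s) x = s"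
proof -
  have "dist (g s) (g 0) = \<bar>s - 0\<bar>" using assms by (intro geo_dist[OF assms(1)]) auto
  then show ?thesis using geo_0[OF assms(1)] assms(2) by simp
qed

lemma pt_in_ball: assumes "x \<in> ball c r" "y \<in> ball c r" "geodesic_seg UNIV dist g x y" "s \<in> {0..dist x y}"
  shows "dist (g s) c < 3 * r"
proof -
  have "dist (g s) c \<le> dist (g s) x + dist x c" by (rule dist_triangle)
  also have "\<dots> = s + dist x c" using geo_pt_dist[OF assms(3,4)] by simp
  also have "\<dots> \<le> dist x y + dist x c" using assms(4) by simp
  also have "\<dots> \<le> (dist x c + dist c y) + dist x c" using dist_triangle[of x y c] by simp
  also have "\<dots> < 3 * r" using assms(1,2) by (simp add: dist_commute)
  finally show ?thesis .
qed

lemma sel_geo: assumes "K < 3" "geodesic_seg M d g1 x1 x2" "geodesic_seg M d g2 x2 x3" "geodesic_seg M d g3 x3 x1"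
  shows "geodesic_seg M d (sel K g1 g2 g3) (sel K x1 x2 x3) (sel K x2 x3 x1)"
  using assms unfolding less3 by auto

lemma sel_in': "x1 \<in> A \<Longrightarrow> x2 \<in> A \<Longrightarrow> x3 \<in> A \<Longrightarrow> sel K x1 x2 x3 \<in> A"
  unfolding sel_def by auto

lemma sel_app': "sel K f1 f2 f3 n = sel K (f1 n) (f2 n) (f3 n)"
  unfolding sel_def by auto

lemma sel_d: "sel K (d x1 x2) (d x2 x3) (d x3 x1) = d (sel K x1 x2 x3) (sel K x2 x3 x1)"
  unfolding sel_def by auto

lemma six_r: assumes "r > 0" shows "delta_cat0_on UNIV dist (6 * r) (ball (c::'a::metric_space) r)"
  unfolding delta_cat0_on_def
proof (intro ballI allI impI)
  fix x1 x2 x3 :: 'a and g1 g2 g3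
  assume x: "x1 \<in> ball c r" "x2 \<in> ball c r" "x3 \<in> ball c r"
    and g: "geodesic_seg UNIV dist g1 x1 x2 \<and> geodesic_seg UNIV dist g2 x2 x3 \<and> geodesic_seg UNIV dist g3 x3 x1"
  show "delta_cat0_triangle UNIV dist (6 * r) x1 x2 x3 g1 g2 g3"
  proof (rule dct_intro)
    fix P1 P2 P3 :: "real^2" and K K' s t
    assume P: "dist P1 P2 = dist x1 x2" "dist P2 P3 = dist x2 x3" "dist P3 P1 = dist x3 x1"
    assume KK: "K < 3" "K' < 3" and s: "s \<in> {0..sel K (dist x1 x2) (dist x2 x3) (dist x3 x1)}"
      and t: "t \<in> {0..sel K' (dist x1 x2) (dist x2 x3) (dist x3 x1)}"
    have sq: "0 \<le> sqrt (Qd (dist x1 x2) (dist x2 x3) (dist x3 x1) K (s / sel K (dist x1 x2) (dist x2 x3) (dist x3 x1))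
             K' (t / sel K' (dist x1 x2) (dist x2 x3) (dist x3 x1)))"
      using dist_cmp[OF KK, of P1 P2 P3 s t] P by (metis zero_le_dist)
    have b: "dist (sel k g1 g2 g3 u) c < 3 * r" if "k < 3" "u \<in> {0..sel k (dist x1 x2) (dist x2 x3) (dist x3 x1)}" for k u
      by (rule pt_in_ball[OF sel_in'[of _ "ball c r", OF x] sel_in'[of _ "ball c r", OF x(2,3,1)]
           sel_geo[OF that(1)] ]) (use g that in \<open>auto simp: sel_d\<close>)
    have "dist (sel K g1 g2 g3 s) (sel K' g1 g2 g3 t) \<le> dist (sel K g1 g2 g3 s) c + dist (sel K' g1 g2 g3 t) c"
      by (rule dist_triangle2)
    also have "\<dots> \<le> 6 * r" using b[OF KK(1) s] b[OF KK(2) t] by simp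
    finally show "dist (sel K g1 g2 g3 s) (sel K' g1 g2 g3 t)
       \<le> sqrt (Qd (dist x1 x2) (dist x2 x3) (dist x3 x1) K (s / sel K (dist x1 x2) (dist x2 x3) (dist x3 x1))
             K' (t / sel K' (dist x1 x2) (dist x2 x3) (dist x3 x1))) + 6 * r"
      using sq by linarith
  qed
qed

lemma dcat_Inf:
  assumes ne: "D \<noteq> {}" and all: "\<And>\<delta>. \<delta> \<in> D \<Longrightarrow> delta_cat0_on M d \<delta> V"
  shows "delta_cat0_on M d (Inf D) V"
  unfolding delta_cat0_on_def
proof (intro ballI allI impI)
  fix x1 x2 x3 g1 g2 g3
  assume x: "x1 \<in> V" "x2 \<in> V" "x3 \<in> V"
    and g: "geodesic_seg M d g1 x1 x2 \<and> geodesic_seg M d g2 x2 x3 \<and> geodesic_seg M d g3 x3 x1"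
  have T: "delta_cat0_triangle M d \<delta> x1 x2 x3 g1 g2 g3" if "\<delta> \<in> D" for \<delta>
    using all[OF that] x g unfolding delta_cat0_on_def by blast
  show "delta_cat0_triangle M d (Inf D) x1 x2 x3 g1 g2 g3"
  proof (rule dct_intro)
    fix P1 P2 P3 :: "real^2" and K K' s t
    assume P: "dist P1 P2 = d x1 x2" "dist P2 P3 = d x2 x3" "dist P3 P1 = d x3 x1"
      and KK: "K < 3" "K' < 3" and s: "s \<in> {0..sel K (d x1 x2) (d x2 x3) (d x3 x1)}"
      and t: "t \<in> {0..sel K' (d x1 x2) (d x2 x3) (d x3 x1)}"
    define Q where "Q = sqrt (Qd (d x1 x2) (d x2 x3) (d x3 x1) K (s / sel K (d x1 x2) (d x2 x3) (d x3 x1))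
       K' (t / sel K' (d x1 x2) (d x2 x3) (d x3 x1)))"
    have "d (sel K g1 g2 g3 s) (sel K' g1 g2 g3 t) - Q \<le> Inf D"
    proof (rule cInf_greatest[OF ne])
      fix \<delta> assume "\<delta> \<in> D"
      show "d (sel K g1 g2 g3 s) (sel K' g1 g2 g3 t) - Q \<le> \<delta>"
        using dct_use[OF T[OF \<open>\<delta> \<in> D\<close>] P KK s t] unfolding Q_def by simp
    qed
    then show "d (sel K g1 g2 g3 s) (sel K' g1 g2 g3 t) \<le> Q + Inf D" by simp
  qed
qed

lemma viol:
  assumes "\<not> delta_cat0_on UNIV dist \<delta> (V :: 'a::metric_space set)"
  shows "\<exists>x1 x2 x3 g1 g2 g3 K K' s t. x1 \<in> V \<and> x2 \<in> V \<and> x3 \<in> V \<and>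
    geodesic_seg UNIV dist g1 x1 x2 \<and> geodesic_seg UNIV dist g2 x2 x3 \<and> geodesic_seg UNIV dist g3 x3 x1 \<and>
    K < 3 \<and> K' < 3 \<and> s \<in> {0..sel K (dist x1 x2) (dist x2 x3) (dist x3 x1)} \<and>
    t \<in> {0..sel K' (dist x1 x2) (dist x2 x3) (dist x3 x1)} \<and>
    dist (sel K g1 g2 g3 s) (sel K' g1 g2 g3 t) >
      sqrt (Qd (dist x1 x2) (dist x2 x3) (dist x3 x1) K (s / sel K (dist x1 x2) (dist x2 x3) (dist x3 x1))
       K' (t / sel K' (dist x1 x2) (dist x2 x3) (dist x3 x1))) + \<delta>"
proof (rule ccontr)
  assume na: "\<not> ?thesis"
  have "delta_cat0_on UNIV dist \<delta> V"
    unfolding delta_cat0_on_def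
  proof (intro ballI allI impI)
    fix x1 x2 x3 g1 g2 g3
    assume x: "x1 \<in> V" "x2 \<in> V" "x3 \<in> V"
      and g: "geodesic_seg UNIV dist g1 x1 x2 \<and> geodesic_seg UNIV dist g2 x2 x3 \<and> geodesic_seg UNIV dist g3 x3 x1"
    show "delta_cat0_triangle UNIV dist \<delta> x1 x2 x3 g1 g2 g3"
    proof (rule dct_intro)
      fix K K' s t
      assume "K < 3" "K' < 3" "s \<in> {0..sel K (dist x1 x2) (dist x2 x3) (dist x3 x1)}"
        "t \<in> {0..sel K' (dist x1 x2) (dist x2 x3) (dist x3 x1)}"
      then show "dist (sel K g1 g2 g3 s) (sel K' g1 g2 g3 t) \<le>
        sqrt (Qd (dist x1 x2) (dist x2 x3) (dist x3 x1) K (s / sel K (dist x1 x2) (dist x2 x3) (dist x3 x1))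
         K' (t / sel K' (dist x1 x2) (dist x2 x3) (dist x3 x1))) + \<delta>"
        using na x g not_le by blast
    qed
  qed
  then show False using assms by simp
qed

lemma ultra3: assumes U: "ultrafilter U" and k: "\<And>n. k n < (3::nat)"
  shows "\<exists>K0<3. eventually (\<lambda>n. k n = K0) U"
proof -
  have c: "eventually P U \<or> eventually (\<lambda>x. \<not> P x) U" for P using ultrafilter_cases[OF U] .
  show ?thesis
  proof (cases "eventually (\<lambda>n. k n = 0) U")
    case True then show ?thesis by (intro exI[of _ "0::nat"]) auto
  next
    case F0: False
    show ?thesis
    proof (cases "eventually (\<lambda>n. k n = 1) U")
      case True then show ?thesis by (intro exI[of _ "1::nat"]) auto
    next
      case False
      have "eventually (\<lambda>n. k n \<noteq> 0) U" "eventually (\<lambda>n. k n \<noteq> 1) U" using c F0 False by blast+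
      then have "eventually (\<lambda>n. k n = 2) U"
        by (rule eventually_elim2) (metis k less3)
      then show ?thesis by (intro exI[of _ "2::nat"]) auto
    qed
  qed
qed

lemma cmp_same: "dist (cmp_pt A B s) (cmp_pt A B \<sigma>) \<le> \<bar>s - \<sigma>\<bar>"
proof (cases "dist A B = 0")
  case True then show ?thesis unfolding cmp_pt_def by simp
next
  case False
  have "cmp_pt A B s - cmp_pt A B \<sigma> = ((s - \<sigma>) / dist A B) *\<^sub>R (B - A)"
    unfolding cmp_pt_def by (simp add: algebra_simps diff_divide_distrib)
  then have "dist (cmp_pt A B s) (cmp_pt A B \<sigma>) = \<bar>s - \<sigma>\<bar> / dist A B * norm (B - A)"
    by (simp add: dist_norm abs_div)
  also have "\<dots> = \<bar>s - \<sigma>\<bar>" using False by (simp add: dist_norm norm_minus_commute)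
  finally show ?thesis by simp
qed

context cone begin

lemma ball_S: assumes "\<And>n. x n \<in> ball (e n) (a n)" shows "x \<in> S"
  unfolding inS
proof (intro exI always_eventually allI)
  fix n have "dist (x n) (e n) < a n" using assms[of n] by (simp add: dist_commute)
  then show "dist (x n) (e n) / a n \<le> 1" using apos[of n] by (simp add: divide_simps)
qed

lemma no_viol:
  assumes CAT: "CAT0_space (cone_pts U a e) (cone_dist U a)" and eps: "\<epsilon> > 0"
    and xb: "\<And>n. x1 n \<in> ball (e n) (a n)" "\<And>n. x2 n \<in> ball (e n) (a n)" "\<And>n. x3 n \<in> ball (e n) (a n)"
    and g: "\<And>n. geodesic_seg UNIV dist (g1 n) (x1 n) (x2 n)" "\<And>n. geodesic_seg UNIV dist (g2 n) (x2 n) (x3 n)"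
      "\<And>n. geodesic_seg UNIV dist (g3 n) (x3 n) (x1 n)"
    and k: "\<And>n. k n < 3" "\<And>n. k' n < 3"
    and L: "\<And>n. L1 n = dist (x1 n) (x2 n)" "\<And>n. L2 n = dist (x2 n) (x3 n)" "\<And>n. L3 n = dist (x3 n) (x1 n)"
    and st: "\<And>n. s n \<in> {0..sel (k n) (L1 n) (L2 n) (L3 n)}" "\<And>n. t n \<in> {0..sel (k' n) (L1 n) (L2 n) (L3 n)}"
    and vi: "\<And>n. dist (sel (k n) (g1 n) (g2 n) (g3 n) (s n)) (sel (k' n) (g1 n) (g2 n) (g3 n) (t n)) >
      sqrt (Qd (L1 n) (L2 n) (L3 n) (k n) (s n / sel (k n) (L1 n) (L2 n) (L3 n))
        (k' n) (t n / sel (k' n) (L1 n) (L2 n) (L3 n))) + \<epsilon> * a n"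
  shows False
proof -
  obtain K0 where K0: "K0 < 3" "eventually (\<lambda>n. k n = K0) U" using ultra3[of U k, OF uf k(1)] by blast
  obtain K1 where K1: "K1 < 3" "eventually (\<lambda>n. k' n = K1) U" using ultra3[of U k', OF uf k(2)] by blast
  have x1S: "x1 \<in> S" and x2S: "x2 \<in> S" and x3S: "x3 \<in> S" using ball_S xb by auto
  define l1 where "l1 = pd x1 x2"
  define l2 where "l2 = pd x2 x3"
  define l3 where "l3 = pd x3 x1"
  have L1t: "((\<lambda>n. L1 n / a n) \<longlongrightarrow> l1) U" unfolding l1_def L by (rule pd_tendsto[OF x1S x2S])
  have L2t: "((\<lambda>n. L2 n / a n) \<longlongrightarrow> l2) U" unfolding l2_def L by (rule pd_tendsto[OF x2S x3S])
  have L3t: "((\<lambda>n. L3 n / a n) \<longlongrightarrow> l3) U" unfolding l3_def L by (rule pd_tendsto[OF x3S x1S])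
  have L0: "0 \<le> L1 n" "0 \<le> L2 n" "0 \<le> L3 n" for n unfolding L by auto
  have selL0: "0 \<le> sel kk (L1 n) (L2 n) (L3 n)" for kk n using L0 by (intro sel_ge) auto
  have selLt: "((\<lambda>n. sel kk (L1 n) (L2 n) (L3 n) / a n) \<longlongrightarrow> sel kk l1 l2 l3) U" for kk
    unfolding sel_div by (intro sel_tendsto L1t L2t L3t)
  have selsum: "sel kk (L1 n) (L2 n) (L3 n) \<le> L1 n + L2 n + L3 n" for kk n
    using L0[of n] unfolding sel_def by auto
  define xs where "xs kk = sel kk x1 x2 x3" for kk
  define ys where "ys kk = sel kk x2 x3 x1" for kk
  define gs where "gs kk = sel kk g1 g2 g3" for kk
  have xsS: "xs kk \<in> S" "ys kk \<in> S" for kk unfolding xs_def ys_def using x1S x2S x3S by (auto intro: sel_in')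
  have gsg: "geodesic_seg UNIV dist (gs kk n) (xs kk n) (ys kk n)" if "kk < 3" for kk n
    using g that unfolding gs_def xs_def ys_def less3 by auto
  have dxy: "dist (xs kk n) (ys kk n) = sel kk (L1 n) (L2 n) (L3 n)" for kk n
    unfolding xs_def ys_def L sel_def by auto
  define G where "G kk = (\<lambda>\<tau>. cls (gpt (gs kk) (xs kk) (ys kk) \<tau>))" for kk
  have Gg: "geodesic_seg (cone_pts U a e) (cone_dist U a) (G kk) (cls (xs kk)) (cls (ys kk))" if "kk < 3" for kk
    unfolding G_def using cone_geod[OF xsS(1)[of kk] xsS(2)[of kk] gsg[OF that]] by blast
  have X: "cls x1 \<in> cone_pts U a e" "cls x2 \<in> cone_pts U a e" "cls x3 \<in> cone_pts U a e"
    using cls_in x1S x2S x3S by auto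
  have T: "delta_cat0_triangle (cone_pts U a e) (cone_dist U a) 0 (cls x1) (cls x2) (cls x3) (G 0) (G 1) (G 2)"
    using CAT X Gg[of 0] Gg[of 1] Gg[of 2] unfolding CAT0_space_def delta_cat0_on_def xs_def ys_def by auto
  have cd: "cone_dist U a (cls x1) (cls x2) = l1" "cone_dist U a (cls x2) (cls x3) = l2"
    "cone_dist U a (cls x3) (cls x1) = l3" unfolding l1_def l2_def l3_def using cd_cls x1S x2S x3S by auto
  obtain P1 P2 P3 :: "real^2" where P: "dist P1 P2 = l1" "dist P2 P3 = l2" "dist P3 P1 = l3"
  proof -
    have "\<exists>P1 P2 P3 :: real^2. dist P1 P2 = l1 \<and> dist P2 P3 = l2 \<and> dist P3 P1 = l3"
      unfolding l1_def l2_def l3_def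
    proof (rule exists_config)
      show "0 \<le> pd x1 x2" "0 \<le> pd x2 x3" "0 \<le> pd x3 x1" using pd_nonneg x1S x2S x3S by auto
      show "pd x1 x2 \<le> pd x2 x3 + pd x3 x1" using pd_tri[OF x1S x3S x2S] pd_sym[of x3 x2] pd_sym[of x1 x3] by simp
      show "pd x2 x3 \<le> pd x1 x2 + pd x3 x1" using pd_tri[OF x2S x1S x3S] pd_sym[of x2 x1] pd_sym[of x1 x3] by simp
      show "pd x3 x1 \<le> pd x1 x2 + pd x2 x3" using pd_tri[OF x3S x2S x1S] pd_sym[of x3 x2] pd_sym[of x2 x1] by simp
    qed
    then show ?thesis using that by blast
  qed
  define s' where "s' = Lim U (\<lambda>n. s n / a n)"
  define t' where "t' = Lim U (\<lambda>n. t n / a n)"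
  have sumt: "((\<lambda>n. (L1 n + L2 n + L3 n) / a n) \<longlongrightarrow> l1 + l2 + l3) U"
    unfolding add_divide_distrib by (intro tendsto_add L1t L2t L3t)
  have lim_in: "(\<lambda>n. u n / a n) \<longlonglongrightarrow> 0 \<Longrightarrow> True" for u by simp
  have ulim: "((\<lambda>n. u n / a n) \<longlongrightarrow> Lim U (\<lambda>n. u n / a n)) U \<and> Lim U (\<lambda>n. u n / a n) \<in> {0..sel K l1 l2 l3}"
    if u: "\<And>n. u n \<in> {0..sel (kk n) (L1 n) (L2 n) (L3 n)}" and kev: "eventually (\<lambda>n. kk n = K) U" for u kk K
  proof -
    have b: "eventually (\<lambda>n. \<bar>u n / a n\<bar> \<le> l1 + l2 + l3 + 1) U"
      using ev_bound[OF sumt]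
    proof (rule eventually_mono)
      fix n assume h: "(L1 n + L2 n + L3 n) / a n \<le> l1 + l2 + l3 + 1"
      have "u n \<le> L1 n + L2 n + L3 n" using u[of n] selsum[of "kk n" n] by simp
      then have "u n / a n \<le> (L1 n + L2 n + L3 n) / a n" using apos[of n] by (intro divide_right_mono) auto
      then show "\<bar>u n / a n\<bar> \<le> l1 + l2 + l3 + 1" using h u[of n] apos[of n] by simp
    qed
    have ut: "((\<lambda>n. u n / a n) \<longlongrightarrow> Lim U (\<lambda>n. u n / a n)) U" by (rule ulim_tendsto[OF uf b])
    have lo: "0 \<le> Lim U (\<lambda>n. u n / a n)"
      by (rule tendsto_lowerbound[OF ut]) (use u apos in \<open>auto intro!: always_eventually simp: less_imp_le Unb\<close>)
    have hi: "Lim U (\<lambda>n. u n / a n) \<le> sel K l1 l2 l3"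
    proof (rule tendsto_le[OF Unb selLt ut])
      show "eventually (\<lambda>n. u n / a n \<le> sel K (L1 n) (L2 n) (L3 n) / a n) U"
        using kev by (rule eventually_mono) (use u apos in \<open>auto intro: divide_right_mono simp: less_imp_le\<close>)
    qed
    show ?thesis using ut lo hi by auto
  qed
  have st1: "((\<lambda>n. s n / a n) \<longlongrightarrow> s') U" "s' \<in> {0..sel K0 l1 l2 l3}"
    using ulim[OF st(1) K0(2)] unfolding s'_def by auto
  have tt1: "((\<lambda>n. t n / a n) \<longlongrightarrow> t') U" "t' \<in> {0..sel K1 l1 l2 l3}"
    using ulim[OF st(2) K1(2)] unfolding t'_def by auto
  have selG: "sel kk (G 0) (G 1) (G 2) = G kk" if "kk < 3" for kk using that unfolding less3 by auto
  have sel_l: "sel kk (cone_dist U a (cls x1) (cls x2)) (cone_dist U a (cls x2) (cls x3)) (cone_dist U a (cls x3) (cls x1))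
     = sel kk l1 l2 l3" for kk unfolding cd ..
  have cone_ineq: "cone_dist U a (G K0 s') (G K1 t') \<le>
     sqrt (Qd l1 l2 l3 K0 (s' / sel K0 l1 l2 l3) K1 (t' / sel K1 l1 l2 l3)) + 0"
    using dct_use[OF T P[folded cd] K0(1) K1(1)] st1(2) tt1(2) unfolding selG[OF K0(1)] selG[OF K1(1)] sel_l cd
    by simp
  define p where "p = gpt (gs K0) (xs K0) (ys K0) s'"
  define q where "q = gpt (gs K1) (xs K1) (ys K1) t'"
  have pS: "p \<in> S" unfolding p_def using gpt_S[OF xsS(1)[of K0] xsS(2)[of K0] gsg[OF K0(1)]] st1(2) by simp
  have qS: "q \<in> S" unfolding q_def using gpt_S[OF xsS(1)[of K1] xsS(2)[of K1] gsg[OF K1(1)]] tt1(2) by simp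
  have Gpq: "cone_dist U a (G K0 s') (G K1 t') = pd p q" unfolding G_def p_def q_def
    using cd_cls[OF pS qS] unfolding p_def q_def .
  define \<sigma> where "\<sigma> n = min (s' * a n) (sel K0 (L1 n) (L2 n) (L3 n))" for n
  define \<tau> where "\<tau> n = min (t' * a n) (sel K1 (L1 n) (L2 n) (L3 n))" for n
  have pn: "p n = sel K0 (g1 n) (g2 n) (g3 n) (\<sigma> n)" for n
    unfolding p_def gpt_def \<sigma>_def dxy gs_def by (simp add: sel_def)
  have qn: "q n = sel K1 (g1 n) (g2 n) (g3 n) (\<tau> n)" for n
    unfolding q_def gpt_def \<tau>_def dxy gs_def by (simp add: sel_def)
  define R where "R n = sqrt (Qd (L1 n) (L2 n) (L3 n) K0 (\<sigma> n / sel K0 (L1 n) (L2 n) (L3 n))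
        K1 (\<tau> n / sel K1 (L1 n) (L2 n) (L3 n))) / a n + \<epsilon>
        - 2 * (\<bar>s n / a n - \<sigma> n / a n\<bar> + \<bar>t n / a n - \<tau> n / a n\<bar>)" for n
  have ev: "eventually (\<lambda>n. R n \<le> dist (p n) (q n) / a n) U"
    using eventually_conj[OF K0(2) K1(2)]
  proof (rule eventually_mono)
    fix n assume kn: "k n = K0 \<and> k' n = K1"
    have an: "0 < a n" by (rule apos)
    have sn: "s n \<in> {0..sel K0 (L1 n) (L2 n) (L3 n)}" "t n \<in> {0..sel K1 (L1 n) (L2 n) (L3 n)}"
      using st[of n] kn by auto
    have \<sigma>n: "\<sigma> n \<in> {0..sel K0 (L1 n) (L2 n) (L3 n)}" "\<tau> n \<in> {0..sel K1 (L1 n) (L2 n) (L3 n)}"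
      unfolding \<sigma>_def \<tau>_def using st1(2) tt1(2) an selL0 by auto
    have gd: "dist (sel kk (g1 n) (g2 n) (g3 n) u) (sel kk (g1 n) (g2 n) (g3 n) w) = \<bar>u - w\<bar>"
      if "kk < 3" "u \<in> {0..sel kk (L1 n) (L2 n) (L3 n)}" "w \<in> {0..sel kk (L1 n) (L2 n) (L3 n)}" for kk u w
      using geo_dist[OF gsg[OF that(1), of n]] that unfolding dxy gs_def sel_app' by blast
    obtain Q1 Q2 Q3 :: "real^2" where Q: "dist Q1 Q2 = L1 n" "dist Q2 Q3 = L2 n" "dist Q3 Q1 = L3 n"
      using config_metric[of "x1 n" "x2 n" "x3 n"] unfolding L by blast
    have cq: "sqrt (Qd (L1 n) (L2 n) (L3 n) kk (u / sel kk (L1 n) (L2 n) (L3 n)) kk' (w / sel kk' (L1 n) (L2 n) (L3 n)))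
      = dist (cmp_pt (sel kk Q1 Q2 Q3) (sel kk Q2 Q3 Q1) u) (cmp_pt (sel kk' Q1 Q2 Q3) (sel kk' Q2 Q3 Q1) w)"
      if "kk < 3" "kk' < 3" for kk kk' u w
      using dist_cmp[OF that, of Q1 Q2 Q3 u w] unfolding Q by simp
    define A where "A = cmp_pt (sel K0 Q1 Q2 Q3) (sel K0 Q2 Q3 Q1)"
    define B where "B = cmp_pt (sel K1 Q1 Q2 Q3) (sel K1 Q2 Q3 Q1)"
    have c1: "dist (A (\<sigma> n)) (B (\<tau> n)) \<le> dist (A (s n)) (B (t n)) + \<bar>s n - \<sigma> n\<bar> + \<bar>t n - \<tau> n\<bar>"
    proof -
      have "dist (A (\<sigma> n)) (B (\<tau> n)) \<le> dist (A (\<sigma> n)) (A (s n)) + dist (A (s n)) (B (\<tau> n))"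
        by (rule dist_triangle)
      moreover have "dist (A (s n)) (B (\<tau> n)) \<le> dist (A (s n)) (B (t n)) + dist (B (t n)) (B (\<tau> n))"
        by (rule dist_triangle)
      moreover have "dist (A (\<sigma> n)) (A (s n)) \<le> \<bar>s n - \<sigma> n\<bar>" unfolding A_def using cmp_same by (metis abs_minus_commute)
      moreover have "dist (B (t n)) (B (\<tau> n)) \<le> \<bar>t n - \<tau> n\<bar>" unfolding B_def using cmp_same by metis
      ultimately show ?thesis by linarith
    qed
    have c2: "dist (sel K0 (g1 n) (g2 n) (g3 n) (s n)) (sel K1 (g1 n) (g2 n) (g3 n) (t n))
       \<le> dist (p n) (q n) + \<bar>s n - \<sigma> n\<bar> + \<bar>t n - \<tau> n\<bar>"
    proof -
      have "dist (sel K0 (g1 n) (g2 n) (g3 n) (s n)) (sel K1 (g1 n) (g2 n) (g3 n) (t n)) \<le>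
        dist (sel K0 (g1 n) (g2 n) (g3 n) (s n)) (p n) + dist (p n) (sel K1 (g1 n) (g2 n) (g3 n) (t n))"
        by (rule dist_triangle)
      moreover have "dist (p n) (sel K1 (g1 n) (g2 n) (g3 n) (t n)) \<le> dist (p n) (q n) + dist (q n) (sel K1 (g1 n) (g2 n) (g3 n) (t n))"
        by (rule dist_triangle)
      moreover have "dist (sel K0 (g1 n) (g2 n) (g3 n) (s n)) (p n) = \<bar>s n - \<sigma> n\<bar>"
        unfolding pn using gd[OF K0(1) sn(1) \<sigma>n(1)] .
      moreover have "dist (q n) (sel K1 (g1 n) (g2 n) (g3 n) (t n)) = \<bar>t n - \<tau> n\<bar>"
        unfolding qn using gd[OF K1(1) \<sigma>n(2) sn(2)] by (simp add: abs_minus_commute)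
      ultimately show ?thesis by linarith
    qed
    have v: "dist (sel K0 (g1 n) (g2 n) (g3 n) (s n)) (sel K1 (g1 n) (g2 n) (g3 n) (t n)) > dist (A (s n)) (B (t n)) + \<epsilon> * a n"
      using vi[of n] kn cq[OF K0(1) K1(1)] unfolding A_def B_def by simp
    have main: "dist (A (\<sigma> n)) (B (\<tau> n)) + \<epsilon> * a n - 2 * (\<bar>s n - \<sigma> n\<bar> + \<bar>t n - \<tau> n\<bar>) \<le> dist (p n) (q n)"
      using c1 c2 v by (smt (verit))
    have eqR: "R n = (dist (A (\<sigma> n)) (B (\<tau> n)) + \<epsilon> * a n - 2 * (\<bar>s n - \<sigma> n\<bar> + \<bar>t n - \<tau> n\<bar>)) / a n"
    proof -
      have ab: "\<bar>u / a n - v / a n\<bar> = \<bar>u - v\<bar> / a n" for u v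
        using an by (simp add: diff_divide_distrib[symmetric] abs_div)
      show ?thesis
        unfolding R_def cq[OF K0(1) K1(1)] A_def B_def ab using an
        by (simp add: diff_divide_distrib add_divide_distrib)
    qed
    show "R n \<le> dist (p n) (q n) / a n" unfolding eqR using main an by (intro divide_right_mono) auto
  qed
  have \<sigma>t: "((\<lambda>n. \<sigma> n / a n) \<longlongrightarrow> min s' (sel K0 l1 l2 l3)) U"
    unfolding \<sigma>_def by (rule min_ratio_tendsto[OF selLt]) (use st1(2) in simp)
  have \<tau>t: "((\<lambda>n. \<tau> n / a n) \<longlongrightarrow> min t' (sel K1 l1 l2 l3)) U"
    unfolding \<tau>_def by (rule min_ratio_tendsto[OF selLt]) (use tt1(2) in simp)
  have Rt: "(R \<longlongrightarrow> sqrt (Qd l1 l2 l3 K0 (s' / sel K0 l1 l2 l3) K1 (t' / sel K1 l1 l2 l3)) + \<epsilon>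
      - 2 * (\<bar>s' - min s' (sel K0 l1 l2 l3)\<bar> + \<bar>t' - min t' (sel K1 l1 l2 l3)\<bar>)) U"
    unfolding R_def[abs_def] \<sigma>_def \<tau>_def
    by (intro tendsto_diff tendsto_add tendsto_mult tendsto_const tendsto_rabs Qlim L1t L2t L3t L0 st1 tt1
        min_ratio_tendsto[OF selLt]) (use st1(2) tt1(2) in auto)
  have "sqrt (Qd l1 l2 l3 K0 (s' / sel K0 l1 l2 l3) K1 (t' / sel K1 l1 l2 l3)) + \<epsilon>
      - 2 * (\<bar>s' - min s' (sel K0 l1 l2 l3)\<bar> + \<bar>t' - min t' (sel K1 l1 l2 l3)\<bar>) \<le> pd p q"
    by (rule tendsto_le[OF Unb pd_tendsto[OF pS qS] Rt ev])
  then have "sqrt (Qd l1 l2 l3 K0 (s' / sel K0 l1 l2 l3) K1 (t' / sel K1 l1 l2 l3)) + \<epsilon> \<le> pd p q"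
    using st1(2) tt1(2) by simp
  then show False using cone_ineq Gpq eps by simp
qed

end


lemma viol_seq:
  fixes r \<delta> :: "nat \<Rightarrow> real"
  assumes "\<And>n. \<exists>c. \<not> delta_cat0_on UNIV dist (\<delta> n) (ball (c::'a::metric_space) (r n))"
  shows "\<exists>(c :: nat \<Rightarrow> 'a) x1 x2 x3 g1 g2 g3 k k' s t. \<forall>n. x1 n \<in> ball (c n) (r n) \<and> x2 n \<in> ball (c n) (r n) \<and> x3 n \<in> ball (c n) (r n) \<and>
    geodesic_seg UNIV dist (g1 n) (x1 n) (x2 n) \<and> geodesic_seg UNIV dist (g2 n) (x2 n) (x3 n) \<and>
    geodesic_seg UNIV dist (g3 n) (x3 n) (x1 n) \<and>
    k n < 3 \<and> k' n < 3 \<and> s n \<in> {0..sel (k n) (dist (x1 n) (x2 n)) (dist (x2 n) (x3 n)) (dist (x3 n) (x1 n))} \<and>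
    t n \<in> {0..sel (k' n) (dist (x1 n) (x2 n)) (dist (x2 n) (x3 n)) (dist (x3 n) (x1 n))} \<and>
    dist (sel (k n) (g1 n) (g2 n) (g3 n) (s n)) (sel (k' n) (g1 n) (g2 n) (g3 n) (t n)) >
      sqrt (Qd (dist (x1 n) (x2 n)) (dist (x2 n) (x3 n)) (dist (x3 n) (x1 n)) (k n)
         (s n / sel (k n) (dist (x1 n) (x2 n)) (dist (x2 n) (x3 n)) (dist (x3 n) (x1 n)))
       (k' n) (t n / sel (k' n) (dist (x1 n) (x2 n)) (dist (x2 n) (x3 n)) (dist (x3 n) (x1 n)))) + \<delta> n"
proof -
  have "\<forall>n. \<exists>(c::'a) x1 x2 x3 g1 g2 g3 k k' s t. x1 \<in> ball c (r n) \<and> x2 \<in> ball c (r n) \<and> x3 \<in> ball c (r n) \<and>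
    geodesic_seg UNIV dist g1 x1 x2 \<and> geodesic_seg UNIV dist g2 x2 x3 \<and>
    geodesic_seg UNIV dist g3 x3 x1 \<and>
    k < 3 \<and> k' < 3 \<and> s \<in> {0..sel k (dist x1 x2) (dist x2 x3) (dist x3 x1)} \<and>
    t \<in> {0..sel k' (dist x1 x2) (dist x2 x3) (dist x3 x1)} \<and>
    dist (sel k g1 g2 g3 s) (sel k' g1 g2 g3 t) >
      sqrt (Qd (dist x1 x2) (dist x2 x3) (dist x3 x1) k (s / sel k (dist x1 x2) (dist x2 x3) (dist x3 x1))
       k' (t / sel k' (dist x1 x2) (dist x2 x3) (dist x3 x1))) + \<delta> n"
  proof
    fix n
    obtain c where "\<not> delta_cat0_on UNIV dist (\<delta> n) (ball (c::'a) (r n))" using assms by blast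
    from viol[OF this] show "\<exists>(c::'a) x1 x2 x3 g1 g2 g3 k k' s t. x1 \<in> ball c (r n) \<and> x2 \<in> ball c (r n) \<and> x3 \<in> ball c (r n) \<and>
    geodesic_seg UNIV dist g1 x1 x2 \<and> geodesic_seg UNIV dist g2 x2 x3 \<and>
    geodesic_seg UNIV dist g3 x3 x1 \<and>
    k < 3 \<and> k' < 3 \<and> s \<in> {0..sel k (dist x1 x2) (dist x2 x3) (dist x3 x1)} \<and>
    t \<in> {0..sel k' (dist x1 x2) (dist x2 x3) (dist x3 x1)} \<and>
    dist (sel k g1 g2 g3 s) (sel k' g1 g2 g3 t) >
      sqrt (Qd (dist x1 x2) (dist x2 x3) (dist x3 x1) k (s / sel k (dist x1 x2) (dist x2 x3) (dist x3 x1))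
       k' (t / sel k' (dist x1 x2) (dist x2 x3) (dist x3 x1))) + \<delta> n" by (rule exI[of _ c])
  qed
  then show ?thesis by metis
qed

theorem theorem3p3:
  assumes "geodesic_space (UNIV :: 'a::metric_space set) dist"
  shows "asymptotically_CAT0 TYPE('a) \<longleftrightarrow>
    (\<exists>f :: real \<Rightarrow> real. (\<forall>r>0. f r \<ge> 0) \<and> ((\<lambda>r. f r / r) \<longlongrightarrow> 0) at_top \<and>
       (\<forall>r>0. \<forall>c::'a. delta_cat0_on UNIV dist (f r) (ball c r)))"
proof
  assume "\<exists>f :: real \<Rightarrow> real. (\<forall>r>0. f r \<ge> 0) \<and> ((\<lambda>r. f r / r) \<longlongrightarrow> 0) at_top \<and>
       (\<forall>r>0. \<forall>c::'a. delta_cat0_on UNIV dist (f r) (ball c r))"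
  then obtain f :: "real \<Rightarrow> real" where f: "((\<lambda>r. f r / r) \<longlongrightarrow> 0) at_top"
    "\<forall>r>0. \<forall>c::'a. delta_cat0_on UNIV dist (f r) (ball c r)" by blast
  show "asymptotically_CAT0 TYPE('a)"
    unfolding asymptotically_CAT0_def
  proof (intro allI impI)
    fix U :: "nat filter" and a :: "nat \<Rightarrow> real" and e :: "nat \<Rightarrow> 'a"
    assume h: "ultrafilter U \<and> nonprincipal U \<and> (\<forall>n. 0 < a n) \<and> filterlim a at_top sequentially"
    interpret cone_f U a e f
      by (unfold_locales) (use h f assms in auto)
    show "CAT0_space (cone_pts U a e) (cone_dist U a)" by (rule cone_CAT0)
  qed
next
  assume AC: "asymptotically_CAT0 TYPE('a)"
  define Ds where "Ds r = {\<delta>. 0 \<le> \<delta> \<and> (\<forall>c::'a. delta_cat0_on UNIV dist \<delta> (ball c r))}" for r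
  define f where "f r = Inf (Ds r)" for r
  have ne: "6 * r \<in> Ds r" if "r > 0" for r unfolding Ds_def using six_r[OF that] that by auto
  have bdd: "bdd_below (Ds r)" for r unfolding Ds_def by (auto intro: bdd_belowI[of _ 0])
  have f0: "f r \<ge> 0" if "r > 0" for r
    unfolding f_def
  proof (rule cInf_greatest)
    show "Ds r \<noteq> {}" using ne[OF that] by blast
    fix x assume "x \<in> Ds r" then show "0 \<le> x" unfolding Ds_def by simp
  qed
  have fcat: "delta_cat0_on UNIV dist (f r) (ball c r)" if "r > 0" for r and c :: 'a
    unfolding f_def
  proof (rule dcat_Inf)
    show "Ds r \<noteq> {}" using ne[OF that] by blast
    fix \<delta> assume "\<delta> \<in> Ds r" then show "delta_cat0_on UNIV dist \<delta> (ball c r)" unfolding Ds_def by blast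
  qed
  have flim: "((\<lambda>r. f r / r) \<longlongrightarrow> 0) at_top"
  proof (rule ccontr)
    assume nl: "\<not> ((\<lambda>r. f r / r) \<longlongrightarrow> 0) at_top"
    then obtain \<epsilon> where eps: "\<epsilon> > 0" "\<not> eventually (\<lambda>r. dist (f r / r) 0 < \<epsilon>) at_top"
      unfolding tendsto_iff by blast
    have "\<forall>n::nat. \<exists>r. real n + 1 \<le> r \<and> \<not> dist (f r / r) 0 < \<epsilon>"
      using eps(2) unfolding eventually_at_top_linorder by (meson not_le)
    then obtain rr where rr: "\<And>n. real n + 1 \<le> rr n" "\<And>n. \<not> dist (f (rr n) / rr n) 0 < \<epsilon>" by metis
    have rpos: "rr n > 0" for n using rr(1)[of n] by (smt (verit) of_nat_0_le_iff)
    have fr: "\<epsilon> * rr n \<le> f (rr n)" for n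
    proof -
      have "\<epsilon> \<le> \<bar>f (rr n) / rr n\<bar>" using rr(2)[of n] by (simp add: dist_real_def)
      also have "\<dots> = f (rr n) / rr n" using f0[OF rpos[of n]] rpos[of n] by simp
      finally show ?thesis using rpos[of n] by (simp add: divide_simps mult.commute)
    qed
    define \<delta> where "\<delta> n = \<epsilon> / 2 * rr n" for n
    have nv: "\<exists>c. \<not> delta_cat0_on UNIV dist (\<delta> n) (ball (c::'a) (rr n))" for n
    proof (rule ccontr)
      assume "\<not> (\<exists>c. \<not> delta_cat0_on UNIV dist (\<delta> n) (ball (c::'a) (rr n)))"
      then have "\<delta> n \<in> Ds (rr n)" unfolding Ds_def \<delta>_def using eps(1) rpos[of n] by auto
      then have "f (rr n) \<le> \<delta> n" unfolding f_def by (rule cInf_lower[OF _ bdd])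
      moreover have "\<delta> n < \<epsilon> * rr n" unfolding \<delta>_def using eps(1) rpos[of n] by simp
      ultimately show False using fr[of n] by simp
    qed
    obtain c x1 x2 x3 :: "nat \<Rightarrow> 'a" and g1 g2 g3 k k' s t where V: "\<forall>n. x1 n \<in> ball (c n) (rr n) \<and> x2 n \<in> ball (c n) (rr n) \<and> x3 n \<in> ball (c n) (rr n) \<and>
      geodesic_seg UNIV dist (g1 n) (x1 n) (x2 n) \<and> geodesic_seg UNIV dist (g2 n) (x2 n) (x3 n) \<and>
      geodesic_seg UNIV dist (g3 n) (x3 n) (x1 n) \<and>
      k n < 3 \<and> k' n < 3 \<and> s n \<in> {0..sel (k n) (dist (x1 n) (x2 n)) (dist (x2 n) (x3 n)) (dist (x3 n) (x1 n))} \<and>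
      t n \<in> {0..sel (k' n) (dist (x1 n) (x2 n)) (dist (x2 n) (x3 n)) (dist (x3 n) (x1 n))} \<and>
      dist (sel (k n) (g1 n) (g2 n) (g3 n) (s n)) (sel (k' n) (g1 n) (g2 n) (g3 n) (t n)) >
        sqrt (Qd (dist (x1 n) (x2 n)) (dist (x2 n) (x3 n)) (dist (x3 n) (x1 n)) (k n)
           (s n / sel (k n) (dist (x1 n) (x2 n)) (dist (x2 n) (x3 n)) (dist (x3 n) (x1 n)))
         (k' n) (t n / sel (k' n) (dist (x1 n) (x2 n)) (dist (x2 n) (x3 n)) (dist (x3 n) (x1 n)))) + \<delta> n"
      using viol_seq[of \<delta> rr, OF nv] by blast
    obtain U :: "nat filter" where U: "ultrafilter U" "nonprincipal U" using ex_nonprincipal_ultrafilter by blast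
    have rlim: "filterlim rr at_top sequentially"
      by (rule filterlim_at_top_mono[OF filterlim_real_sequentially]) (use rr(1) in \<open>auto intro!: always_eventually simp: add.commute[of _ 1] intro: order_trans[OF _ rr(1)]\<close>)
    interpret cone U rr c by unfold_locales (use U rpos rlim in auto)
    have CAT: "CAT0_space (cone_pts U rr c) (cone_dist U rr)"
      using AC U rpos rlim unfolding asymptotically_CAT0_def by blast
    show False
    proof (rule no_viol[OF CAT, of "\<epsilon> / 2" x1 x2 x3 g1 g2 g3 k k' "\<lambda>n. dist (x1 n) (x2 n)" "\<lambda>n. dist (x2 n) (x3 n)"
          "\<lambda>n. dist (x3 n) (x1 n)" s t])
      show "\<epsilon> / 2 > 0" using eps by simp
    qed (use V \<delta>_def in \<open>auto simp: mult.assoc\<close>)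
  qed
  show "\<exists>f :: real \<Rightarrow> real. (\<forall>r>0. f r \<ge> 0) \<and> ((\<lambda>r. f r / r) \<longlongrightarrow> 0) at_top \<and>
       (\<forall>r>0. \<forall>c::'a. delta_cat0_on UNIV dist (f r) (ball c r))"
    using f0 flim fcat by blast
qed


end
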